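(* Let $q\in\mathbb{C}$ with $0<|q|<1$, and let $a,b,c$ be complex numbers such that at least one of $a$, $b$, $c$ is of the form $q^n$ with $n\in\{1,2,\ldots\}$ (and such that all terms below are well defined). Then \[ \sum_{k=-\infty}^\infty \frac{(q/a,q/b,q/c)_k}{(a,b,c)_k}(abc)^k q^{k^2-2k} =\frac{(q,ab/q,bc/q,ac/q)_\infty}{(a,b,c,abc/q^2)_\infty} \sum_{k=0}^\infty\frac{(q/a,q/b,q/c)_k}{(q,q^3/abc)_k}q^k, \] and \[ \sum_{k=-\infty}^\infty \frac{(q/a,q/b,q/c)_k}{(aq,bq,cq)_k}(abc)^k q^{k^2} =\frac{(q,ab,bc,ac)_\infty}{(aq,bq,cq,abc/q)_\infty} \sum_{k=0}^\infty\frac{(q/a,q/b,q/c)_k}{(q,q^2/abc)_k}q^k. \]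
   Context: For an integer $n$, the $q$-shifted factorial is $(a)_n=(a;q)_n$ with $(a)_0=1$, $(a)_n=(1-a)(1-aq)\cdots(1-aq^{n-1})$ for $n\ge1$, and $(a)_n=[(1-aq^{-1})(1-aq^{-2})\cdots(1-aq^{n})]^{-1}$ for $n\le -1$. Also $(a_1,\ldots,a_m)_n=(a_1)_n\cdots(a_m)_n$ and $(a_1,\ldots,a_m)_\infty=\lim_{n\to\infty}(a_1,\ldots,a_m)_n$. *)

theory Defs
  imports "HOL-Analysis.Analysis"
begin

text \<open>q-shifted factorial (a;q)_n for integer n, following the paper's convention:
  (a)_0 = 1, (a)_n = (1-a)...(1-aq^(n-1)) for n >= 1,
  (a)_n = [(1-aq^-1)...(1-aq^n)]^-1 for n <= -1.
  (Isabelle's inverse 0 = 0 is used when this reciprocal is of zero.)\<close>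
definition qpoch :: "complex \<Rightarrow> complex \<Rightarrow> int \<Rightarrow> complex" where
  "qpoch a q n =
     (if 0 \<le> n then (\<Prod>j<nat n. (1 - a * q ^ j))
      else inverse (\<Prod>j\<in>{1..nat (- n)}. (1 - a * inverse q ^ j)))"

definition qpoch_inf :: "complex \<Rightarrow> complex \<Rightarrow> complex" where
  "qpoch_inf a q = lim (\<lambda>n. \<Prod>j<n. (1 - a * q ^ j))"

end

theory Submission
  imports Defs "HOL-Computational_Algebra.Polynomial"
begin
definition pf :: "nat \<Rightarrow> (complex \<Rightarrow> complex) \<Rightarrow> bool" where
  "pf N f \<longleftrightarrow> (\<exists>p. degree p \<le> N \<and> (\<forall>u. f u = poly p u))"

lemma pf_const: "pf 0 (\<lambda>u. c)"
  unfolding pf_def by (rule exI[of _ "[:c:]"]) simp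

lemma pf_lin: "pf 1 (\<lambda>u. a + b*u)"
  unfolding pf_def by (rule exI[of _ "[:a, b:]"]) (simp add: degree_pCons_le)

lemma pf_mono: "pf N f \<Longrightarrow> N \<le> M \<Longrightarrow> pf M f"
  unfolding pf_def using order.trans by blast

lemma pf_mult: "pf N f \<Longrightarrow> pf M g \<Longrightarrow> pf (N+M) (\<lambda>u. f u * g u)"
  unfolding pf_def
proof (elim exE conjE)
  fix p r assume "degree p \<le> N" "\<forall>u. f u = poly p u" "degree r \<le> M" "\<forall>u. g u = poly r u"
  then show "\<exists>s. degree s \<le> N + M \<and> (\<forall>u. f u * g u = poly s u)"
    by (intro exI[of _ "p*r"]) (auto intro: order.trans[OF degree_mult_le])
qed

lemma pf_cmult: "pf N f \<Longrightarrow> pf N (\<lambda>u. c * f u)"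
  using pf_mult[OF pf_const, of N f c] by simp

lemma pf_add: "pf N f \<Longrightarrow> pf N g \<Longrightarrow> pf N (\<lambda>u. f u + g u)"
  unfolding pf_def
proof (elim exE conjE)
  fix p r assume "degree p \<le> N" "\<forall>u. f u = poly p u" "degree r \<le> N" "\<forall>u. g u = poly r u"
  then show "\<exists>s. degree s \<le> N \<and> (\<forall>u. f u + g u = poly s u)"
    by (intro exI[of _ "p+r"]) (auto intro: order.trans[OF degree_add_le_max])
qed

lemma pf_sum: "finite S \<Longrightarrow> (\<And>r. r \<in> S \<Longrightarrow> pf N (f r)) \<Longrightarrow> pf N (\<lambda>u. \<Sum>r\<in>S. f r u)"
proof (induction S rule: finite_induct)
  case empty
  then show ?case using pf_mono[OF pf_const[of 0]] by simp
next
  case (insert x F)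
  then show ?case by (simp add: pf_add)
qed

lemma pf_prod: "finite S \<Longrightarrow> (\<And>r. r \<in> S \<Longrightarrow> pf 1 (f r)) \<Longrightarrow> pf (card S) (\<lambda>u. \<Prod>r\<in>S. f r u)"
proof (induction S rule: finite_induct)
  case empty
  then show ?case using pf_const[of 1] by simp
next
  case (insert x F)
  then have "pf (1 + card F) (\<lambda>u. f x u * (\<Prod>r\<in>F. f r u))"
    by (intro pf_mult) auto
  then show ?case using insert by simp
qed

lemma pf_eq:
  assumes "pf N f" "pf N g" "finite S" "card S > N" "\<And>u. u \<in> S \<Longrightarrow> f u = g u"
  shows "f u = g u"
proof -
  obtain p where p: "degree p \<le> N" "\<forall>u. f u = poly p u" using assms(1) unfolding pf_def by auto
  obtain r where r: "degree r \<le> N" "\<forall>u. g u = poly r u" using assms(2) unfolding pf_def by auto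
  have "p = r"
    by (rule poly_eqI_degree[of S]) (use assms p r in auto)
  then show ?thesis using p r by simp
qed

definition Qr :: "complex \<Rightarrow> complex \<Rightarrow> nat \<Rightarrow> nat \<Rightarrow> complex" where
  "Qr q x i j = (\<Prod>t\<in>{i..<j}. 1 - x*q^t)"

definition pr :: "complex \<Rightarrow> complex \<Rightarrow> nat \<Rightarrow> complex" where
  "pr q x n = (\<Prod>j<n. 1 - x*q^j)"

lemma pr_Qr: "pr q x n = Qr q x 0 n"
  unfolding pr_def Qr_def by (simp add: atLeast0LessThan)

lemma Qr_split: "i \<le> j \<Longrightarrow> j \<le> k \<Longrightarrow> Qr q x i j * Qr q x j k = Qr q x i k"
  unfolding Qr_def by (rule prod.atLeastLessThan_concat)

lemma Qr_shift: "Qr q (x*q^s) i j = Qr q x (i+s) (j+s)"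
  unfolding Qr_def prod.atLeastLessThan_shift_bounds[of _ i s j]
  by (simp add: power_add mult_ac comp_def)

lemma Qr_empty: "j \<le> i \<Longrightarrow> Qr q x i j = 1"
  unfolding Qr_def by simp

lemma Qr_Suc: "i \<le> j \<Longrightarrow> Qr q x i (Suc j) = Qr q x i j * (1 - x*q^j)"
  unfolding Qr_def by (simp add: prod.atLeastLessThan_Suc)

lemma Qr_zero: "i \<le> t \<Longrightarrow> t < j \<Longrightarrow> x*q^t = 1 \<Longrightarrow> Qr q x i j = 0"
  unfolding Qr_def by (rule prod_zero) auto

lemma Qr_nz: "(\<And>t. i \<le> t \<Longrightarrow> t < j \<Longrightarrow> x*q^t \<noteq> 1) \<Longrightarrow> Qr q x i j \<noteq> 0"
  unfolding Qr_def by (subst prod_zero_iff) auto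

lemma pr_Suc: "pr q x (Suc n) = pr q x n * (1 - x*q^n)"
  unfolding pr_def by simp

lemma pr_Suc': "pr q x (Suc n) = (1 - x) * pr q (x*q) n"
  unfolding pr_def prod.lessThan_Suc_shift by (simp add: mult_ac)

lemma pr_zero: "t < n \<Longrightarrow> x*q^t = 1 \<Longrightarrow> pr q x n = 0"
  unfolding pr_def by (rule prod_zero) auto

lemma pr_nz: "(\<And>t. t < n \<Longrightarrow> x*q^t \<noteq> 1) \<Longrightarrow> pr q x n \<noteq> 0"
  unfolding pr_def by (subst prod_zero_iff) auto

definition Dq :: "complex \<Rightarrow> nat \<Rightarrow> nat \<Rightarrow> complex" where
  "Dq q N k = (\<Prod>j<k. q^N - q^j)"

lemma Dq_zero: "N < k \<Longrightarrow> Dq q N k = 0"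
  unfolding Dq_def by (rule prod_zero) auto

context
  fixes q :: complex
  assumes q0: "q \<noteq> 0" and qn: "\<And>m. m \<ge> 1 \<Longrightarrow> q^m \<noteq> 1"
begin

lemma prq_nz: "pr q q n \<noteq> 0"
proof (rule pr_nz)
  fix t assume "t < n"
  have "q*q^t = q^(Suc t)" by simp
  then show "q*q^t \<noteq> 1" using qn[of "Suc t"] by simp
qed

lemma pow_inj: "q^i = q^j \<Longrightarrow> i = j"
proof (rule ccontr)
  assume h: "q^i = q^j" "i \<noteq> j"
  show False
  proof (cases "i < j")
    case True
    then have "q^j = q^i * q^(j-i)" by (simp add: power_add[symmetric])
    then have "q^(j-i) = 1" using h q0 by simp
    then show False using qn[of "j-i"] True by simp
  next
    case False
    then have "q^i = q^j * q^(i-j)" using h by (simp add: power_add[symmetric])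
    then have "q^(i-j) = 1" using h q0 by simp
    then show False using qn[of "i-j"] False h by simp
  qed
qed

definition tcv :: "complex \<Rightarrow> nat \<Rightarrow> nat \<Rightarrow> complex" where
  "tcv B N k = pr q (inverse q ^ N) k * pr q B k / pr q q k * q^k"

definition gcv :: "complex \<Rightarrow> nat \<Rightarrow> nat \<Rightarrow> complex" where
  "gcv B N M = pr q (inverse q ^ N) M * pr q B (Suc M) / pr q q M"

lemma cv_tel: "(\<Sum>k\<le>M. tcv B (Suc N) k - B * tcv B N k) = gcv B N M"
proof (induction M)
  case 0
  then show ?case by (simp add: tcv_def gcv_def pr_def)
next
  case (Suc M)
  define w where "w = inverse q"
  have wq: "w * q = 1" using q0 by (simp add: w_def)
  define P where "P = pr q (w^N) M"
  define Bb where "Bb = pr q B (Suc M)"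
  define Qq where "Qq = pr q q M"
  define z where "z = q^M"
  have Qq: "Qq \<noteq> 0" using prq_nz by (simp add: Qq_def)
  have z1: "1 - q*z \<noteq> 0" using qn[of "Suc M"] by (simp add: z_def)
  have wN: "w^(Suc N)*q = w^N"
  proof -
    have "w^(Suc N)*q = w^N * (w*q)" by (simp add: mult_ac)
    then show ?thesis using wq by simp
  qed
  have e1: "pr q (w^Suc N) (Suc M) = (1 - w^Suc N) * P"
    unfolding pr_Suc' P_def wN by simp
  have e2: "pr q (w^N) (Suc M) = P * (1 - w^N*z)" by (simp add: pr_Suc P_def z_def)
  have e3: "pr q B (Suc (Suc M)) = Bb * (1 - B*(q*z))" by (simp add: pr_Suc Bb_def z_def)
  have e4: "pr q q (Suc M) = Qq * (1 - q*z)" by (simp add: pr_Suc Qq_def z_def)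
  have "gcv B N M + (tcv B (Suc N) (Suc M) - B * tcv B N (Suc M)) = gcv B N (Suc M)"
    unfolding gcv_def tcv_def w_def[symmetric] e1 e2 e3 e4 Bb_def[symmetric] P_def[symmetric]
      Qq_def[symmetric]
  proof -
    have key: "(1 - w^N*z)*(1 - B*(q*z)) - (1 - q*z) = q*z*((1 - w^Suc N) - B*(1 - w^N*z))"
    proof -
      have "q*z*(w^Suc N) = w^N*z" using wq by (simp add: mult_ac)
      then show ?thesis by (simp add: algebra_simps)
    qed
    show "P * Bb / Qq + ((1 - w ^ Suc N) * P * Bb / (Qq * (1 - q * z)) * q ^ Suc M -
        B * (P * (1 - w ^ N * z) * Bb / (Qq * (1 - q * z)) * q ^ Suc M)) =
        P * (1 - w ^ N * z) * (Bb * (1 - B * (q * z))) / (Qq * (1 - q * z))"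
    proof -
      have qs: "q^Suc M = q*z" by (simp add: z_def)
      define C where "C = P*Bb/(Qq*(1-q*z))"
      have c1: "P*Bb/Qq = C*(1-q*z)" unfolding C_def using Qq z1 by (simp add: field_simps)
      have c2: "(1 - w ^ Suc N) * P * Bb / (Qq * (1 - q * z)) * (q*z) = C*((1 - w ^ Suc N)*(q*z))"
        unfolding C_def by (simp add: field_simps)
      have c3: "B * (P * (1 - w ^ N * z) * Bb / (Qq * (1 - q * z)) * (q*z)) = C*(B*(1 - w ^ N * z)*(q*z))"
        unfolding C_def by (simp add: field_simps)
      have c4: "P * (1 - w ^ N * z) * (Bb * (1 - B * (q * z))) / (Qq * (1 - q * z)) = C*((1 - w ^ N * z)*(1 - B * (q * z)))"
        unfolding C_def by (simp add: field_simps)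
      show ?thesis unfolding qs c1 c2 c3 c4
      proof -
        have "(1 - q * z) + (1 - w ^ Suc N) * (q * z) - B * (1 - w ^ N * z) * (q * z) =
              (1 - w ^ N * z) * (1 - B * (q * z))" using key by (simp add: algebra_simps)
        then have "C*((1 - q * z) + (1 - w ^ Suc N) * (q * z) - B * (1 - w ^ N * z) * (q * z)) =
              C*((1 - w ^ N * z) * (1 - B * (q * z)))" by simp
        then show "C * (1 - q * z) + (C * ((1 - w ^ Suc N) * (q * z)) - C * (B * (1 - w ^ N * z) * (q * z))) =
            C * ((1 - w ^ N * z) * (1 - B * (q * z)))" by (simp add: algebra_simps)
      qed
    qed
  qed
  then show ?case using Suc by simp
qed

lemma cv: "(\<Sum>k\<le>N. pr q (inverse q ^ N) k * pr q B k / pr q q k * q^k) = B^N"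
proof (induction N)
  case 0
  then show ?case by (simp add: pr_def)
next
  case (Suc N)
  have z: "pr q (inverse q ^ N) (Suc N) = 0"
    by (rule pr_zero[of N]) (use q0 in \<open>auto simp: power_mult_distrib[symmetric]\<close>)
  have h: "(\<Sum>k\<le>Suc N. tcv B (Suc N) k) - B * (\<Sum>k\<le>Suc N. tcv B N k) = gcv B N (Suc N)"
    using cv_tel[where M="Suc N" and B=B and N=N] by (simp only: sum_subtractf sum_distrib_left)
  have "(\<Sum>k\<le>Suc N. tcv B (Suc N) k) = gcv B N (Suc N) + B * (\<Sum>k\<le>Suc N. tcv B N k)"
    using h by (metis diff_eq_eq)
  also have "gcv B N (Suc N) = 0" unfolding gcv_def z by simp
  also have "(\<Sum>k\<le>Suc N. tcv B N k) = (\<Sum>k\<le>N. tcv B N k)"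
    using z by (simp add: tcv_def)
  finally show ?case using Suc by (simp add: tcv_def del: sum.atMost_Suc)
qed

end

lemma pf_lin': "(\<And>u. f u = a + b*u) \<Longrightarrow> pf 1 f"
proof -
  assume "\<And>u. f u = a + b*u"
  then have "f = (\<lambda>u. a + b*u)" by auto
  then show ?thesis using pf_lin by simp
qed

lemma pf_Qr: "pf (j - i) (\<lambda>u. Qr q (c*u) i j)"
proof -
  have "pf (card {i..<j}) (\<lambda>u. \<Prod>t\<in>{i..<j}. 1 - c*u*q^t)"
  proof (rule pf_prod)
    fix t show "pf 1 (\<lambda>u. 1 - c*u*q^t)" by (rule pf_lin'[where a=1 and b="-c*q^t"]) (simp add: algebra_simps)
  qed simp
  then show ?thesis unfolding Qr_def by simp
qed

lemma pf_lower: "pf r (\<lambda>u. \<Prod>j<r. u - x j)"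
proof -
  have "pf (card {..<r}) (\<lambda>u. \<Prod>j<r. u - x j)"
  proof (rule pf_prod)
    fix t show "pf 1 (\<lambda>u. u - x t)" by (rule pf_lin'[where a="- x t" and b=1]) simp
  qed simp
  then show ?thesis by simp
qed

definition cc :: "complex \<Rightarrow> complex \<Rightarrow> nat \<Rightarrow> complex" where
  "cc q A r = (if r = 0 then 1 else Qr q A 1 r * (1 - A*q^(2*r)) / pr q q r)"

definition Kc :: "complex \<Rightarrow> complex \<Rightarrow> nat \<Rightarrow> complex \<Rightarrow> nat \<Rightarrow> complex" where
  "Kc q A N d r = cc q A r * Dq q N r * (A^2*q^2/d)^r * q^(r^2-r) * pr q d r
      * Qr q (A/d) (r+1) (N+1) / Qr q A (N+1) (N+1+r)"

definition LP :: "complex \<Rightarrow> complex \<Rightarrow> nat \<Rightarrow> complex \<Rightarrow> complex \<Rightarrow> complex" where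
  "LP q A N d u = (\<Sum>r\<le>N. Kc q A N d r * (\<Prod>j<r. u - q^j) * Qr q (A*q*u) r N)"

definition Mc :: "complex \<Rightarrow> complex \<Rightarrow> nat \<Rightarrow> complex \<Rightarrow> nat \<Rightarrow> complex" where
  "Mc q A N d k = Qr q A 1 (N+1) * Dq q N k * pr q d k / pr q q k * q^k * (\<Prod>j<k. - A/d * inverse q ^ j)"

definition RP :: "complex \<Rightarrow> complex \<Rightarrow> nat \<Rightarrow> complex \<Rightarrow> complex \<Rightarrow> complex" where
  "RP q A N d u = (\<Sum>k\<le>N. Mc q A N d k * (\<Prod>j<k. u - q^j) * Qr q (A*q*u/d) 0 (N-k))"

definition Fs :: "complex \<Rightarrow> complex \<Rightarrow> nat \<Rightarrow> nat \<Rightarrow> complex \<Rightarrow> complex" where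
  "Fs q A m N d = Qr q (A/d) (m+1) (N+1) * Qr q A (m+1) (N+1)"

context
  fixes q A :: complex
  assumes q0: "q \<noteq> 0" and qn: "\<And>m. m \<ge> 1 \<Longrightarrow> q^m \<noteq> 1"
    and A0: "A \<noteq> 0" and An: "\<And>j. j \<ge> 1 \<Longrightarrow> A*q^j \<noteq> 1"
begin

lemma QA_nz: "i \<ge> 1 \<Longrightarrow> Qr q A i j \<noteq> 0"
  by (rule Qr_nz) (use An in auto)

lemma pf_LP: "pf N (LP q A N d)"
  unfolding LP_def
proof (rule pf_sum)
  fix r assume r: "r \<in> {..N}"
  have "pf (0 + (r + (N - r))) (\<lambda>u. Kc q A N d r * ((\<Prod>j<r. u - q^j) * Qr q (A*q*u) r N))"
    by (intro pf_mult pf_const pf_lower pf_Qr)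
  then show "pf N (\<lambda>u. Kc q A N d r * (\<Prod>j<r. u - q^j) * Qr q (A*q*u) r N)"
    using r by (simp add: mult.assoc)
qed simp

lemma pf_RP: "pf N (RP q A N d)"
  unfolding RP_def
proof (rule pf_sum)
  fix r assume r: "r \<in> {..N}"
  have e: "\<And>u. A*q*u/d = (A*q/d)*u" by simp
  have "pf (0 + (r + (N - r - 0))) (\<lambda>u. Mc q A N d r * ((\<Prod>j<r. u - q^j) * Qr q ((A*q/d)*u) 0 (N-r)))"
    by (intro pf_mult pf_const pf_lower pf_Qr)
  then show "pf N (\<lambda>u. Mc q A N d r * (\<Prod>j<r. u - q^j) * Qr q (A*q*u/d) 0 (N-r))"
    using r by (simp add: mult.assoc e)
qed simp


lemma frac_aux:
  fixes D1 D2 P1 P2 C Z a :: complex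
  assumes "D1 \<noteq> 0" "D2 \<noteq> 0" "P1*D2 = C*P2*D1"
  shows "Z*(a*P1)/D1 = (a*C)*(Z*P2/D2)"
proof -
  have "P1 = C*P2*D1/D2" using assms by (simp add: eq_divide_eq)
  then show ?thesis using assms by (simp add: field_simps)
qed

lemma Qr_shiftA: "Qr q (A*q*q^m) r N = Qr q A (m+1+r) (m+1+N)"
proof -
  have e: "A*q*q^m = A*q^(m+1)" by simp
  have "Qr q (A*q^(m+1)) r N = Qr q A (r+(m+1)) (N+(m+1))" by (rule Qr_shift)
  then show ?thesis unfolding e by (simp only: add.commute)
qed

lemma swapL_term:
  assumes "r \<le> m" "m \<le> N"
  shows "Kc q A N d r * Dq q m r * Qr q (A*q*q^m) r N = Fs q A m N d * (Kc q A m d r * Dq q N r * Qr q (A*q*q^N) r m)"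
proof -
  define X where "X = cc q A r * Dq q N r * Dq q m r * (A^2*q^2/d)^r * q^(r^2-r) * pr q d r"
  define a1 where "a1 = Qr q (A/d) (r+1) (m+1)"
  define a2 where "a2 = Qr q (A/d) (m+1) (N+1)"
  have a12: "Qr q (A/d) (r+1) (N+1) = a1 * a2" unfolding a1_def a2_def
    by (rule Qr_split[symmetric]) (use assms in auto)
  have L: "Kc q A N d r * Dq q m r * Qr q (A*q*q^m) r N
       = (X * a1) * (a2 * Qr q A (m+1+r) (m+1+N)) / Qr q A (N+1) (N+1+r)"
    unfolding Kc_def X_def a12 Qr_shiftA by (simp only: divide_inverse mult_ac)
  have R: "Kc q A m d r * Dq q N r * Qr q (A*q*q^N) r m
       = (X * a1) * Qr q A (N+1+r) (N+1+m) / Qr q A (m+1) (m+1+r)"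
    unfolding Kc_def X_def a1_def Qr_shiftA by (simp only: divide_inverse mult_ac)
  have n1: "Qr q A (N+1) (N+1+r) \<noteq> 0" "Qr q A (m+1) (m+1+r) \<noteq> 0"
    using QA_nz[of "N+1"] QA_nz[of "m+1"] by auto
  have h1: "Qr q A (m+1) (m+1+r) * Qr q A (m+1+r) (m+1+N) = Qr q A (m+1) (m+1+N)"
    by (rule Qr_split) (use assms in auto)
  have h2: "Qr q A (m+1) (N+1) * Qr q A (N+1) (N+1+r) = Qr q A (m+1) (N+1+r)"
    by (rule Qr_split) (use assms in auto)
  have h3: "Qr q A (m+1) (N+1+r) * Qr q A (N+1+r) (N+1+m) = Qr q A (m+1) (m+1+N)"
  proof -
    have e: "N+1+m = m+1+N" by simp
    show ?thesis using Qr_split[of "m+1" "N+1+r" "N+1+m" q A] assms unfolding e by simp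
  qed
  have key: "Qr q A (m+1+r) (m+1+N) * Qr q A (m+1) (m+1+r) =
      Qr q A (m+1) (N+1) * Qr q A (N+1+r) (N+1+m) * Qr q A (N+1) (N+1+r)"
  proof -
    have "Qr q A (m+1+r) (m+1+N) * Qr q A (m+1) (m+1+r) = Qr q A (m+1) (m+1+r) * Qr q A (m+1+r) (m+1+N)"
      by (simp only: mult.commute)
    also have "\<dots> = Qr q A (m+1) (N+1+r) * Qr q A (N+1+r) (N+1+m)" unfolding h1 h3 ..
    also have "\<dots> = Qr q A (m+1) (N+1) * Qr q A (N+1) (N+1+r) * Qr q A (N+1+r) (N+1+m)"
      unfolding h2 ..
    finally show ?thesis by (simp only: mult_ac)
  qed
  show ?thesis unfolding L R Fs_def a2_def[symmetric]
    by (rule frac_aux[OF n1 key])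
qed

lemma Dq_eq: "(\<Prod>j<r. q^m - q^j) = Dq q m r"
  unfolding Dq_def ..

lemma swapL:
  assumes "m \<le> N"
  shows "LP q A N d (q^m) = Fs q A m N d * LP q A m d (q^N)"
proof -
  have "LP q A N d (q^m) = (\<Sum>r\<le>N. Kc q A N d r * Dq q m r * Qr q (A*q*q^m) r N)"
    unfolding LP_def Dq_eq ..
  also have "\<dots> = (\<Sum>r\<le>m. Kc q A N d r * Dq q m r * Qr q (A*q*q^m) r N)"
  proof (rule sum.mono_neutral_right)
    show "\<forall>i\<in>{..N} - {..m}. Kc q A N d i * Dq q m i * Qr q (A * q * q ^ m) i N = 0"
      using Dq_zero[of m _ q] by auto
  qed (use assms in auto)
  also have "\<dots> = (\<Sum>r\<le>m. Fs q A m N d * (Kc q A m d r * Dq q N r * Qr q (A*q*q^N) r m))"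
    by (rule sum.cong) (use assms swapL_term in auto)
  also have "\<dots> = Fs q A m N d * LP q A m d (q^N)"
    unfolding LP_def Dq_eq sum_distrib_left ..
  finally show ?thesis .
qed

lemma swapR_term:
  assumes "k \<le> m" "m \<le> N"
  shows "Mc q A N d k * Dq q m k * Qr q (A*q*q^m/d) 0 (N-k) = Fs q A m N d * (Mc q A m d k * Dq q N k * Qr q (A*q*q^N/d) 0 (m-k))"
proof -
  define Y where "Y = Dq q N k * Dq q m k * pr q d k / pr q q k * q^k * (\<Prod>j<k. - A/d * inverse q ^ j)"
  have s1: "Qr q (A*q*q^m/d) 0 (N-k) = Qr q (A/d) (m+1) (N+m+1-k)"
  proof -
    have e: "A*q*q^m/d = (A/d)*q^(m+1)" by simp
    have idx: "N-k+(m+1) = N+m+1-k" using assms by simp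
    have "Qr q ((A/d)*q^(m+1)) 0 (N-k) = Qr q (A/d) (0+(m+1)) (N-k+(m+1))" by (rule Qr_shift)
    then show ?thesis unfolding e idx by simp
  qed
  have s2: "Qr q (A*q*q^N/d) 0 (m-k) = Qr q (A/d) (N+1) (N+m+1-k)"
  proof -
    have e: "A*q*q^N/d = (A/d)*q^(N+1)" by simp
    have idx: "m-k+(N+1) = N+m+1-k" using assms by simp
    have "Qr q ((A/d)*q^(N+1)) 0 (m-k) = Qr q (A/d) (0+(N+1)) (m-k+(N+1))" by (rule Qr_shift)
    then show ?thesis unfolding e idx by simp
  qed
  have L: "Mc q A N d k * Dq q m k * Qr q (A*q*q^m/d) 0 (N-k) = Y * Qr q A 1 (N+1) * Qr q (A/d) (m+1) (N+m+1-k)"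
    unfolding Mc_def Y_def s1 by (simp only: divide_inverse mult_ac)
  have R: "Mc q A m d k * Dq q N k * Qr q (A*q*q^N/d) 0 (m-k) = Y * Qr q A 1 (m+1) * Qr q (A/d) (N+1) (N+m+1-k)"
    unfolding Mc_def Y_def s2 by (simp only: divide_inverse mult_ac)
  have h1: "Qr q A 1 (m+1) * Qr q A (m+1) (N+1) = Qr q A 1 (N+1)"
    by (rule Qr_split) (use assms in auto)
  have h2: "Qr q (A/d) (m+1) (N+1) * Qr q (A/d) (N+1) (N+m+1-k) = Qr q (A/d) (m+1) (N+m+1-k)"
    by (rule Qr_split) (use assms in auto)
  show ?thesis unfolding L R Fs_def h1[symmetric] h2[symmetric] by (simp only: mult_ac)
qed

lemma swapR:
  assumes "m \<le> N"
  shows "RP q A N d (q^m) = Fs q A m N d * RP q A m d (q^N)"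
proof -
  have "RP q A N d (q^m) = (\<Sum>k\<le>N. Mc q A N d k * Dq q m k * Qr q (A*q*q^m/d) 0 (N-k))"
    unfolding RP_def Dq_eq ..
  also have "\<dots> = (\<Sum>k\<le>m. Mc q A N d k * Dq q m k * Qr q (A*q*q^m/d) 0 (N-k))"
  proof (rule sum.mono_neutral_right)
    show "\<forall>i\<in>{..N} - {..m}. Mc q A N d i * Dq q m i * Qr q (A*q*q^m/d) 0 (N-i) = 0"
      using Dq_zero[of m _ q] by auto
  qed (use assms in auto)
  also have "\<dots> = (\<Sum>k\<le>m. Fs q A m N d * (Mc q A m d k * Dq q N k * Qr q (A*q*q^N/d) 0 (m-k)))"
    by (rule sum.cong) (use assms swapR_term in auto)
  also have "\<dots> = Fs q A m N d * RP q A m d (q^N)"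
    unfolding RP_def Dq_eq sum_distrib_left ..
  finally show ?thesis .
qed

end

lemma prod_rev_shift:
  fixes g :: "nat \<Rightarrow> complex"
  assumes "k \<le> N"
  shows "(\<Prod>j\<in>{k..<N}. g j) = (\<Prod>t<N-k. g (N - Suc t))"
proof -
  have "(\<Prod>j\<in>{k..<N}. g j) = (\<Prod>i\<in>{k..<N}. g (N + k - Suc i))"
    by (rule prod.atLeastLessThan_rev)
  also have "\<dots> = (\<Prod>t\<in>{0..<N-k}. g (N + k - Suc (k + t)))"
    by (subst prod.atLeastLessThan_shift_0) (simp add: comp_def)
  also have "\<dots> = (\<Prod>t<N-k. g (N - Suc t))"
    by (simp add: atLeast0LessThan)
  finally show ?thesis .
qed

context
  fixes q :: complex
  assumes q0: "q \<noteq> 0"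
begin

lemma pow_pair: "(\<Prod>j<N. q^j * q^j) * q^N = q^(N*N)"
proof (induction N)
  case 0 then show ?case by simp
next
  case (Suc N)
  have "(\<Prod>j<Suc N. q^j * q^j) * q^Suc N = ((\<Prod>j<N. q^j * q^j) * q^N) * (q^N * q^N * q)"
    by (simp add: mult_ac)
  also have "\<dots> = q^(N*N) * (q^N * q^N * q)" using Suc by simp
  also have "\<dots> = q^(Suc N * Suc N)" by (simp add: power_add[symmetric] algebra_simps)
  finally show ?case .
qed

lemma Dq_winv: "Dq q N k * (inverse q ^ N)^k = pr q (inverse q ^ N) k"
proof -
  have "Dq q N k * (inverse q ^ N)^k = (\<Prod>j<k. (q^N - (q^j)) * inverse q ^ N)"
    unfolding Dq_def by (simp add: prod.distrib)
  also have "\<dots> = pr q (inverse q ^ N) k"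
    unfolding pr_def
  proof (rule prod.cong)
    fix j
    have "q^N * inverse q ^ N = 1" using q0 by (simp add: power_mult_distrib[symmetric])
    then show "(q^N - (q^j)) * inverse q ^ N = 1 - inverse q ^ N * q^j" by (simp add: algebra_simps)
  qed simp
  finally show ?thesis .
qed

lemma pr_d_neg:
  assumes "d \<noteq> 0"
  shows "pr q d k * (\<Prod>j<k. - (inverse q ^ j / d)) = (\<Prod>j<k. 1 - (inverse q ^ j / d))"
proof -
  have "pr q d k * (\<Prod>j<k. - (inverse q ^ j / d)) = (\<Prod>j<k. (1 - d*q^j) * (- (inverse q ^ j / d)))"
    unfolding pr_def by (rule prod.distrib[symmetric])
  also have "\<dots> = (\<Prod>j<k. 1 - (inverse q ^ j / d))"
  proof (rule prod.cong)
    fix j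
    define x where "x = inverse q ^ j"
    define e where "e = inverse d"
    have qx: "q^j * x = 1" using q0 unfolding x_def by (simp add: power_mult_distrib[symmetric])
    have de: "d * e = 1" using assms unfolding e_def by simp
    have "(1 - d*q^j) * (- (x * e)) = (q^j*x)*(d*e) - x * e" by (simp add: algebra_simps)
    then have "(1 - d*q^j) * (- (x * e)) = 1 - x * e" using qx de by simp
    then show "(1 - d*q^j) * (- (inverse q ^ j / d)) = 1 - inverse q ^ j / d"
      unfolding x_def e_def by (simp add: divide_inverse)
  qed simp
  finally show ?thesis .
qed

lemma prod_wd_split:
  assumes "k \<le> N" "N \<ge> 1"
  shows "(\<Prod>j<k. 1 - (inverse q ^ j / d)) * Qr q (inverse q ^ (N-1) / d) 0 (N-k) = (\<Prod>j<N. 1 - (inverse q ^ j / d))"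
proof -
  have "Qr q (inverse q ^ (N-1) / d) 0 (N-k) = (\<Prod>t<N-k. 1 - inverse q ^ (N - Suc t) / d)"
    unfolding Qr_def atLeast0LessThan
  proof (rule prod.cong)
    fix t assume "t \<in> {..<N-k}"
    then have t: "t \<le> N - 1" using assms by auto
    have ee: "N - 1 = (N - Suc t) + t" using t assms by simp
    have "inverse q ^ (N-1) = inverse q ^ (N - Suc t) * inverse q ^ t"
      unfolding ee by (rule power_add)
    moreover have "inverse q ^ t * q^t = 1" using q0 by (simp add: power_mult_distrib[symmetric])
    ultimately have "inverse q ^ (N-1) * q^t = inverse q ^ (N - Suc t)"
      by (metis mult.assoc mult.right_neutral)
    then show "1 - inverse q ^ (N - 1) / d * q ^ t = 1 - inverse q ^ (N - Suc t) / d"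
      unfolding times_divide_eq_left by simp
  qed simp
  also have "\<dots> = (\<Prod>j\<in>{k..<N}. 1 - (inverse q ^ j / d))"
    using prod_rev_shift[OF assms(1), of "\<lambda>j. 1 - inverse q ^ j / d"] by simp
  finally have e: "Qr q (inverse q ^ (N-1) / d) 0 (N-k) = (\<Prod>j\<in>{k..<N}. 1 - (inverse q ^ j / d))" .
  show ?thesis unfolding e lessThan_atLeast0
    by (rule prod.atLeastLessThan_concat) (use assms in auto)
qed

lemma DqNN: "Dq q N N = (\<Prod>j<N. - (q^j)) * pr q q N"
proof -
  have "Dq q N N = (\<Prod>j<N. (- (q^j)) * (1 - q^(N-j)))"
    unfolding Dq_def
  proof (rule prod.cong)
    fix j assume "j \<in> {..<N}"
    then have "q^N = q^j * q^(N-j)" by (simp add: power_add[symmetric])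
    then show "q^N - q^j = (- (q^j)) * (1 - q^(N-j))" by (simp add: algebra_simps)
  qed simp
  also have "\<dots> = (\<Prod>j<N. - (q^j)) * (\<Prod>j<N. 1 - q^(N-j))" by (rule prod.distrib)
  also have "(\<Prod>j<N. 1 - q^(N-j)) = pr q q N"
  proof -
    have "(\<Prod>j<N. 1 - q^(N-j)) = (\<Prod>j\<in>{0..<N}. 1 - q^(N-j))" by (simp add: atLeast0LessThan)
    also have "\<dots> = (\<Prod>t<N-0. 1 - q^(N - (N - Suc t)))" by (rule prod_rev_shift) simp
    also have "\<dots> = pr q q N" unfolding pr_def by (rule prod.cong) auto
    finally show ?thesis .
  qed
  finally show ?thesis .
qed

end

context
  fixes q A :: complex
  assumes q0: "q \<noteq> 0" and qn: "\<And>m. m \<ge> 1 \<Longrightarrow> q^m \<noteq> 1"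
    and A0: "A \<noteq> 0" and An: "\<And>j. j \<ge> 1 \<Longrightarrow> A*q^j \<noteq> 1"
begin

lemma wq: "q^n * inverse q ^ n = 1"
  using q0 by (simp add: power_mult_distrib[symmetric])

lemma P1: "(\<Prod>j<k. inverse q ^ N / A - q^j) = (inverse q ^ N / A)^k * pr q (A*q^N) k"
proof -
  have "(\<Prod>j<k. inverse q ^ N / A - q^j) = (\<Prod>j<k. (inverse q ^ N / A) * (1 - A*q^N*q^j))"
  proof (rule prod.cong)
    fix j
    have "(inverse q ^ N / A) * (A*q^N*q^j) = (q^N * inverse q ^ N) * q^j" using A0 by (simp add: field_simps)
    then have "(inverse q ^ N / A) * (A*q^N*q^j) = q^j" using wq by simp
    then show "inverse q ^ N / A - q^j = (inverse q ^ N / A) * (1 - A*q^N*q^j)"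
      by (simp add: right_diff_distrib)
  qed simp
  also have "\<dots> = (inverse q ^ N / A)^k * pr q (A*q^N) k"
    unfolding pr_def prod.distrib by simp
  finally show ?thesis .
qed

lemma LP_u0:
  assumes N: "N \<ge> 1"
  shows "LP q A N d (inverse q ^ N / A) = Kc q A N d N * ((inverse q ^ N / A)^N * pr q (A*q^N) N)"
proof -
  define u0 where "u0 = inverse q ^ N / A"
  have z: "Qr q (A*q*u0) r N = 0" if "r < N" for r
  proof (rule Qr_zero[of r "N-1"])
    have "A*q*u0*q^(N-1) = (q^N * inverse q ^ N) * (A/A)"
      using N unfolding u0_def by (simp add: field_simps power_Suc[symmetric] del: power_Suc)
    then show "A*q*u0*q^(N-1) = 1" using A0 wq by simp
  qed (use that in auto)
  obtain n where n: "N = Suc n" using N by (cases N) auto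
  have e1: "Qr q (A*q*u0) N N = 1" by (simp add: Qr_def)
  have e2: "(\<Prod>j<N. u0 - q^j) = u0^N * pr q (A*q^N) N" unfolding u0_def by (rule P1)
  have "LP q A N d u0 = (\<Sum>r\<le>n. Kc q A N d r * (\<Prod>j<r. u0 - q^j) * Qr q (A*q*u0) r N)
       + Kc q A N d N * (\<Prod>j<N. u0 - q^j) * Qr q (A*q*u0) N N"
    unfolding LP_def n by (simp only: sum.atMost_Suc)
  moreover have "(\<Sum>r\<le>n. Kc q A N d r * (\<Prod>j<r. u0 - q^j) * Qr q (A*q*u0) r N) = 0"
    by (rule sum.neutral) (use z n in auto)
  ultimately show ?thesis unfolding u0_def[symmetric] e1 e2 by simp
qed

lemma RP_u0:
  assumes N: "N \<ge> 1" and d: "d \<noteq> 0"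
  shows "RP q A N d (inverse q ^ N / A) = Qr q A 1 (N+1) * (\<Prod>j<N. 1 - (inverse q ^ j / d)) * (A*q^N)^N"
proof -
  define u0 where "u0 = inverse q ^ N / A"
  define W where "W = (\<Prod>j<N. 1 - (inverse q ^ j / d))"
  have au: "A*q*u0/d = inverse q ^ (N-1) / d"
  proof -
    have "inverse q ^ N = inverse q * inverse q ^ (N-1)" using N by (simp add: power_Suc[symmetric] del: power_Suc)
    then show ?thesis unfolding u0_def using A0 q0 by (simp add: field_simps)
  qed
  have tm: "Mc q A N d k * (\<Prod>j<k. u0 - q^j) * Qr q (A*q*u0/d) 0 (N-k)
      = Qr q A 1 (N+1) * W * (pr q (inverse q ^ N) k * pr q (A*q^N) k / pr q q k * q^k)"
    if k: "k \<le> N" for k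
  proof -
    have c1: "(\<Prod>j<k. - A/d * inverse q ^ j) * u0^k = (inverse q ^ N)^k * (\<Prod>j<k. - (inverse q ^ j / d))"
    proof -
      have "(\<Prod>j<k. - A/d * inverse q ^ j) * u0^k = (\<Prod>j<k. (- A/d * inverse q ^ j) * u0)"
        by (simp only: prod.distrib prod_constant card_lessThan)
      also have "\<dots> = (\<Prod>j<k. inverse q ^ N * (- (inverse q ^ j / d)))"
        by (rule prod.cong) (use A0 in \<open>auto simp: u0_def field_simps\<close>)
      also have "\<dots> = (inverse q ^ N)^k * (\<Prod>j<k. - (inverse q ^ j / d))"
        by (simp only: prod.distrib prod_constant card_lessThan)
      finally show ?thesis .
    qed
    have c2: "(\<Prod>j<k. 1 - (inverse q ^ j / d)) * Qr q (inverse q ^ (N-1) / d) 0 (N-k) = W"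
      unfolding W_def using prod_wd_split[OF q0 k N] by simp
    define PA where "PA = (\<Prod>j<k. - A/d * inverse q ^ j)"
    define Pw where "Pw = (\<Prod>j<k. - (inverse q ^ j / d))"
    define Z where "Z = Qr q A 1 (N+1) * Dq q N k * pr q d k * inverse (pr q q k) * q^k * pr q (A*q^N) k
        * Qr q (inverse q ^ (N-1) / d) 0 (N-k)"
    have p1: "(\<Prod>j<k. u0 - q^j) = u0^k * pr q (A*q^N) k"
      unfolding u0_def by (rule P1)
    have "Mc q A N d k * (\<Prod>j<k. u0 - q^j) * Qr q (A*q*u0/d) 0 (N-k) = (PA * u0^k) * Z"
      unfolding Mc_def au p1 PA_def Z_def by (simp only: divide_inverse mult_ac)
    also have "\<dots> = ((inverse q ^ N)^k * Pw) * Z" unfolding PA_def Pw_def c1 ..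
    also have "\<dots> = Qr q A 1 (N+1) * (Dq q N k * (inverse q ^ N)^k) * ((pr q d k * Pw)
         * Qr q (inverse q ^ (N-1) / d) 0 (N-k)) * pr q (A*q^N) k * inverse (pr q q k) * q^k"
      unfolding Z_def by (simp only: mult_ac)
    also have "\<dots> = Qr q A 1 (N+1) * W * (pr q (inverse q ^ N) k * pr q (A*q^N) k / pr q q k * q^k)"
      unfolding Pw_def Dq_winv[OF q0] pr_d_neg[OF q0 d] c2 by (simp only: divide_inverse mult_ac)
    finally show ?thesis .
  qed
  have "RP q A N d u0 = (\<Sum>k\<le>N. Qr q A 1 (N+1) * W * (pr q (inverse q ^ N) k * pr q (A*q^N) k / pr q q k * q^k))"
    unfolding RP_def by (rule sum.cong) (use tm in auto)
  also have "\<dots> = Qr q A 1 (N+1) * W * (\<Sum>k\<le>N. pr q (inverse q ^ N) k * pr q (A*q^N) k / pr q q k * q^k)"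
    by (simp only: sum_distrib_left)
  also have "(\<Sum>k\<le>N. pr q (inverse q ^ N) k * pr q (A*q^N) k / pr q q k * q^k) = (A*q^N)^N"
    by (rule cv[OF q0 qn])
  finally show ?thesis unfolding u0_def W_def .
qed

end

context
  fixes q A :: complex
  assumes q0: "q \<noteq> 0" and qn: "\<And>m. m \<ge> 1 \<Longrightarrow> q^m \<noteq> 1"
    and A0: "A \<noteq> 0" and An: "\<And>j. j \<ge> 1 \<Longrightarrow> A*q^j \<noteq> 1"
begin

lemma key_pow:
  assumes d: "d \<noteq> 0"
  shows "(\<Prod>j<N. - (q^j)) * ((A^2*q^2/d)^N * q^(N^2-N)) * (inverse q ^ N / A)^N
       = (\<Prod>j<N. - (inverse q ^ j / d)) * (A*q^N)^N"
proof -
  define P where "P = (\<Prod>j<N. - (q^j))"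
  define Pw where "Pw = (\<Prod>j<N. - (inverse q ^ j / d))"
  have P0: "P \<noteq> 0" unfolding P_def using q0 by (simp add: prod_zero_iff)
  have PPw: "P * Pw = (inverse d)^N"
  proof -
    have "P * Pw = (\<Prod>j<N. (- (q^j)) * (- (inverse q ^ j / d)))"
      unfolding P_def Pw_def by (rule prod.distrib[symmetric])
    also have "\<dots> = (\<Prod>j<N. inverse d)"
    proof (rule prod.cong)
      fix j
      have "q^j * inverse q ^ j = 1" using q0 by (simp add: power_mult_distrib[symmetric])
      then show "(- (q^j)) * (- (inverse q ^ j / d)) = inverse d"
        by (simp add: divide_inverse mult.assoc[symmetric])
    qed simp
    finally show ?thesis by simp
  qed
  have PP: "P * P * q^N = q^(N*N)"
  proof -
    have "P * P = (\<Prod>j<N. q^j * q^j)"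
      unfolding P_def prod.distrib[symmetric] by simp
    then show ?thesis using pow_pair[OF q0, of N] by simp
  qed
  have E: "(A^2*q^2/d)^N * q^(N^2-N) * (inverse q ^ N / A)^N = A^N * q^N * (inverse d)^N"
  proof -
    have i1: "(A^2*q^2/d)^N = A^N * A^N * (q^N * q^N) * (inverse d)^N"
      by (simp add: power_mult_distrib power_divide divide_inverse power_mult[symmetric] power_add[symmetric]
          mult_2 power_inverse)
    have i2: "(inverse q ^ N / A)^N = inverse q ^ (N*N) / A^N"
      by (simp add: power_divide power_mult)
    have i3: "q^(N^2-N) * (q^N * q^N) = q^(N*N) * q^N"
    proof -
      have "N^2 - N + (N + N) = N*N + N" by (simp add: power2_eq_square)
      then show ?thesis by (metis power_add)
    qed
    have i4: "q^(N*N) * inverse q ^ (N*N) = 1" using q0 by (simp add: power_mult_distrib[symmetric])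
    have "(A^2*q^2/d)^N * q^(N^2-N) * (inverse q ^ N / A)^N
        = (A^N * A^N / A^N) * (q^(N^2-N) * (q^N * q^N)) * inverse q ^ (N*N) * (inverse d)^N"
      unfolding i1 i2 by (simp add: field_simps)
    also have "\<dots> = A^N * (q^(N*N) * inverse q ^ (N*N)) * q^N * (inverse d)^N"
      unfolding i3 using A0 by (simp add: mult_ac)
    also have "\<dots> = A^N * q^N * (inverse d)^N" unfolding i4 by simp
    finally show ?thesis .
  qed
  have "P * ((A^2*q^2/d)^N * q^(N^2-N)) * (inverse q ^ N / A)^N = P * (A^N * q^N * (inverse d)^N)"
    using E by (simp add: mult.assoc)
  also have "\<dots> = Pw * (P * P * q^N) * A^N" unfolding PPw[symmetric] by (simp only: mult_ac)
  also have "\<dots> = Pw * (A*q^N)^N" unfolding PP by (simp add: power_mult_distrib power_mult mult_ac)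
  finally show ?thesis unfolding P_def Pw_def .
qed


lemma Kc_val:
  assumes N: "N \<ge> 1" and d: "d \<noteq> 0"
  shows "Kc q A N d N * ((inverse q ^ N / A)^N * pr q (A*q^N) N)
       = Qr q A 1 (N+1) * (\<Prod>j<N. 1 - (inverse q ^ j / d)) * (A*q^N)^N"
proof -
  define P where "P = (\<Prod>j<N. - (q^j))"
  define Pw where "Pw = (\<Prod>j<N. - (inverse q ^ j / d))"
  define E where "E = (A^2*q^2/d)^N * q^(N^2-N)"
  define u0 where "u0 = inverse q ^ N / A"
  have a: "pr q (A*q^N) N = Qr q A N (N+N)"
    unfolding pr_Qr using Qr_shift[of q A N 0 N] by simp
  have b1: "Qr q A 1 (N+1) = Qr q A 1 N * (1 - A*q^N)" using Qr_Suc[of 1 N q A] N by simp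
  have b2: "Qr q A N (N+N) = (1 - A*q^N) * Qr q A (N+1) (N+N)"
  proof -
    have "Qr q A N (N+1) = 1 - A*q^N" using Qr_Suc[of N N q A] by (simp add: Qr_def)
    moreover have "Qr q A N (N+1) * Qr q A (N+1) (N+N) = Qr q A N (N+N)"
      by (rule Qr_split) (use N in auto)
    ultimately show ?thesis by simp
  qed
  have b3: "Qr q A (N+1) (N+1+N) = Qr q A (N+1) (N+N) * (1 - A*q^(N+N))"
    using Qr_Suc[of "N+1" "N+N" q A] N by simp
  have n3: "Qr q A (N+1) (N+1+N) \<noteq> 0" using QA_nz[OF q0 qn A0 An, of "N+1"] by simp
  have prq: "pr q q N \<noteq> 0" by (rule prq_nz[OF q0 qn])
  have c: "cc q A N = Qr q A 1 N * (1 - A*q^(N+N)) / pr q q N"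
    unfolding cc_def using N by (simp add: mult_2)
  have QAid: "Qr q A 1 N * (1 - A*q^(N+N)) * Qr q A N (N+N) / Qr q A (N+1) (N+1+N) = Qr q A 1 (N+1)"
    unfolding b1 b2 using n3 unfolding b3 by (simp add: field_simps)
  have dq: "Dq q N N = P * pr q q N" unfolding P_def by (rule DqNN[OF q0])
  have pd: "pr q d N * Pw = (\<Prod>j<N. 1 - (inverse q ^ j / d))" unfolding Pw_def by (rule pr_d_neg[OF q0 d])
  have kp: "P * E * u0^N = Pw * (A*q^N)^N"
    unfolding P_def E_def u0_def Pw_def by (rule key_pow[OF d])
  have "Kc q A N d N * (u0^N * pr q (A*q^N) N)
      = (Qr q A 1 N * (1 - A*q^(N+N)) * Qr q A N (N+N) / Qr q A (N+1) (N+1+N)) * (pr q q N / pr q q N)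
        * (P * E * u0^N) * pr q d N"
    unfolding Kc_def c dq a E_def by (simp add: Qr_def divide_inverse mult_ac)
  also have "\<dots> = Qr q A 1 (N+1) * (pr q d N * Pw) * (A*q^N)^N"
    unfolding QAid kp using prq by simp
  finally show ?thesis unfolding u0_def pd .
qed

theorem LP_RP: "d \<noteq> 0 \<Longrightarrow> LP q A N d u = RP q A N d u"
proof (induction N arbitrary: d u rule: less_induct)
  case (less N)
  show ?case
  proof (cases "N = 0")
    case True
    then show ?thesis
      by (simp add: LP_def RP_def Kc_def Mc_def cc_def Dq_def Qr_def pr_def)
  next
    case False
    then have N: "N \<ge> 1" by simp
    define u0 where "u0 = inverse q ^ N / A"
    define S where "S = insert u0 ((\<lambda>m. q^m) ` {..<N})"
    have inj: "inj_on (\<lambda>m. q^m) {..<N}" by (rule inj_onI) (rule pow_inj[OF q0 qn])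
    have notin: "u0 \<notin> (\<lambda>m. q^m) ` {..<N}"
    proof
      assume "u0 \<in> (\<lambda>m. q^m) ` {..<N}"
      then obtain m where m: "u0 = q^m" by auto
      then have "A * q^(N+m) = A * u0 * q^N" by (simp add: power_add mult_ac)
      also have "\<dots> = q^N * inverse q ^ N" unfolding u0_def using A0 by simp
      also have "\<dots> = 1" using wq[OF q0 qn A0 An] by simp
      finally show False using An[of "N+m"] N by simp
    qed
    have cardS: "card S = Suc N" unfolding S_def using inj notin
      by (simp add: card_image)
    have "LP q A N d u = RP q A N d u"
    proof (rule pf_eq[OF pf_LP pf_RP, where S=S])
      show "finite S" unfolding S_def by simp
      show "N < card S" using cardS by simp
      fix v assume "v \<in> S"
      then consider "v = u0" | m where "m < N" "v = q^m" unfolding S_def by auto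
      then show "LP q A N d v = RP q A N d v"
      proof cases
        case 1
        then show ?thesis unfolding u0_def
          using LP_u0[OF q0 qn A0 An N, of d] RP_u0[OF q0 qn A0 An N less.prems] Kc_val[OF N less.prems]
          by simp
      next
        case 2
        have mN: "m \<le> N" using 2 by simp
        have "LP q A N d v = Fs q A m N d * LP q A m d (q^N)"
          unfolding 2 by (rule swapL) (use q0 qn A0 An mN in auto)
        also have "LP q A m d (q^N) = RP q A m d (q^N)" using less.IH[OF 2(1) less.prems] .
        also have "Fs q A m N d * RP q A m d (q^N) = RP q A N d v"
          unfolding 2 by (rule swapR[symmetric]) (use q0 qn A0 An mN in auto)
        finally show ?thesis .
      qed
    qed (use q0 qn A0 An in auto)
    then show ?thesis .
  qed
qed

end

lemma pr_neg_gen: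
  fixes q Y Z :: complex
  assumes q0: "q \<noteq> 0" and YZ: "Y * Z = 1"
  shows "pr q Y k * (\<Prod>j<k. - (Z * inverse q ^ j)) = (\<Prod>j<k. 1 - Z * inverse q ^ j)"
proof -
  have "pr q Y k * (\<Prod>j<k. - (Z * inverse q ^ j)) = (\<Prod>j<k. (1 - Y*q^j) * (- (Z * inverse q ^ j)))"
    unfolding pr_def by (rule prod.distrib[symmetric])
  also have "\<dots> = (\<Prod>j<k. 1 - Z * inverse q ^ j)"
  proof (rule prod.cong)
    fix j
    define x where "x = inverse q ^ j"
    have qx: "q^j * x = 1" using q0 unfolding x_def by (simp add: power_mult_distrib[symmetric])
    have "(1 - Y*q^j) * (- (Z * x)) = (Y*Z)*(q^j*x) - Z * x" by (simp add: algebra_simps)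
    then show "(1 - Y*q^j) * (- (Z * inverse q ^ j)) = 1 - Z * inverse q ^ j"
      using qx YZ unfolding x_def by simp
  qed simp
  finally show ?thesis .
qed

lemma pr_inv_prod: "(\<Prod>j<k. inverse e - q^j) = (inverse e)^k * pr q e k" if "e \<noteq> 0" for e q :: complex
proof -
  have "(\<Prod>j<k. inverse e - q^j) = (\<Prod>j<k. inverse e * (1 - e*q^j))"
    by (rule prod.cong) (use that in \<open>auto simp: algebra_simps\<close>)
  then show ?thesis unfolding pr_def prod.distrib by simp
qed

lemma pr_shift1: "pr q (x*q) m = Qr q x 1 (m+1)"
  unfolding pr_Qr using Qr_shift[of q x 1 0 m] by simp

lemma pr_nz_le: "pr q x N \<noteq> 0 \<Longrightarrow> k \<le> N \<Longrightarrow> pr q x k \<noteq> 0"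
  unfolding pr_def by (auto simp: prod_zero_iff)

context
  fixes q A :: complex
  assumes q0: "q \<noteq> 0" and qn: "\<And>m. m \<ge> 1 \<Longrightarrow> q^m \<noteq> 1"
    and A0: "A \<noteq> 0" and An: "\<And>j. j \<ge> 1 \<Longrightarrow> A*q^j \<noteq> 1"
begin

definition lhsW :: "nat \<Rightarrow> complex \<Rightarrow> complex \<Rightarrow> complex" where
  "lhsW N d e = (\<Sum>m\<le>N. cc q A m * (pr q (inverse q ^ N) m * pr q d m * pr q e m
      / (Qr q A (N+1) (N+1+m) * pr q (A*q/d) m * pr q (A*q/e) m)) * (A^2*q^(N+2)/(d*e))^m * q^(m^2-m))"

definition rhsW :: "nat \<Rightarrow> complex \<Rightarrow> complex \<Rightarrow> complex" where
  "rhsW N d e = Qr q A 1 (N+1) * Qr q (A*q/(d*e)) 0 N / (Qr q (A/d) 1 (N+1) * Qr q (A/e) 1 (N+1))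
     * (\<Sum>k\<le>N. pr q (inverse q ^ N) k * pr q d k * pr q e k / (pr q q k * pr q (d*e*inverse q ^ N/A) k) * q^k)"

lemma Dq_split: "Dq q N k = pr q (inverse q ^ N) k * q^(N*k)"
proof -
  have "Dq q N k * (inverse q ^ N)^k * q^(N*k) = Dq q N k * ((q^N * inverse q ^ N)^k)"
    by (simp add: power_mult power_mult_distrib mult_ac)
  also have "\<dots> = Dq q N k" using q0 by (simp add: power_mult_distrib[symmetric])
  finally show ?thesis using Dq_winv[OF q0, of N k] by simp
qed

lemma LP_lhsW:
  assumes d: "d \<noteq> 0" and e: "e \<noteq> 0" and Qd: "Qr q (A/d) 1 (N+1) \<noteq> 0" and Qe: "Qr q (A/e) 1 (N+1) \<noteq> 0"
  shows "LP q A N d (inverse e) = Qr q (A/d) 1 (N+1) * Qr q (A/e) 1 (N+1) * lhsW N d e"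
proof -
  have tm: "Kc q A N d m * (\<Prod>j<m. inverse e - q^j) * Qr q (A*q*inverse e) m N
     = Qr q (A/d) 1 (N+1) * Qr q (A/e) 1 (N+1) * (cc q A m * (pr q (inverse q ^ N) m * pr q d m * pr q e m
      / (Qr q A (N+1) (N+1+m) * pr q (A*q/d) m * pr q (A*q/e) m)) * (A^2*q^(N+2)/(d*e))^m * q^(m^2-m))"
    if m: "m \<le> N" for m
  proof -
    have s1: "Qr q (A*q*inverse e) m N = Qr q (A/e) (m+1) (N+1)"
      using Qr_shift[of q "A/e" 1 m N] by (simp add: divide_inverse mult_ac)
    have s2: "Qr q (A/d) 1 (N+1) = pr q (A*q/d) m * Qr q (A/d) (m+1) (N+1)"
      using pr_shift1[of q "A/d" m] Qr_split[of 1 "m+1" "N+1" q "A/d"] m by simp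
    have s3: "Qr q (A/e) 1 (N+1) = pr q (A*q/e) m * Qr q (A/e) (m+1) (N+1)"
      using pr_shift1[of q "A/e" m] Qr_split[of 1 "m+1" "N+1" q "A/e"] m by simp
    have nd: "pr q (A*q/d) m \<noteq> 0" using Qd s2 by auto
    have ne: "pr q (A*q/e) m \<noteq> 0" using Qe s3 by auto
    have pw: "(A^2*q^2/d)^m * q^(m^2-m) * q^(N*m) * (inverse e)^m = (A^2*q^(N+2)/(d*e))^m * q^(m^2-m)"
      by (simp add: power_mult_distrib power_divide divide_inverse power_add power_mult mult_ac power_inverse power2_eq_square)
    have "Kc q A N d m * (\<Prod>j<m. inverse e - q^j) * Qr q (A*q*inverse e) m N
       = cc q A m * pr q (inverse q ^ N) m * pr q d m * pr q e m * Qr q (A/d) (m+1) (N+1) * Qr q (A/e) (m+1) (N+1)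
         / Qr q A (N+1) (N+1+m) * ((A^2*q^2/d)^m * q^(m^2-m) * q^(N*m) * (inverse e)^m)"
      unfolding Kc_def s1 pr_inv_prod[OF e] Dq_split by (simp only: divide_inverse mult_ac)
    also have "\<dots> = cc q A m * pr q (inverse q ^ N) m * pr q d m * pr q e m * Qr q (A/d) (m+1) (N+1) * Qr q (A/e) (m+1) (N+1)
         / Qr q A (N+1) (N+1+m) * ((A^2*q^(N+2)/(d*e))^m * q^(m^2-m))"
      unfolding pw ..
    also have "\<dots> = Qr q (A/d) 1 (N+1) * Qr q (A/e) 1 (N+1) * (cc q A m * (pr q (inverse q ^ N) m * pr q d m * pr q e m
      / (Qr q A (N+1) (N+1+m) * pr q (A*q/d) m * pr q (A*q/e) m)) * (A^2*q^(N+2)/(d*e))^m * q^(m^2-m))"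
      unfolding s2 s3 using nd ne by (simp add: field_simps)
    finally show ?thesis .
  qed
  show ?thesis unfolding LP_def lhsW_def sum_distrib_left
    by (rule sum.cong) (use tm in \<open>auto simp: mult.assoc\<close>)
qed


lemma RP_rhsW:
  assumes d: "d \<noteq> 0" and e: "e \<noteq> 0" and Qd: "Qr q (A/d) 1 (N+1) \<noteq> 0" and Qe: "Qr q (A/e) 1 (N+1) \<noteq> 0"
    and nY: "pr q (d*e*inverse q ^ N/A) N \<noteq> 0"
  shows "RP q A N d (inverse e) = Qr q (A/d) 1 (N+1) * Qr q (A/e) 1 (N+1) * rhsW N d e"
proof -
  define X where "X = A*q/(d*e)"
  define Y where "Y = d*e*inverse q ^ N/A"
  define Z where "Z = A*q^N/(d*e)"
  have YZ: "Y * Z = 1"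
  proof -
    have "Y * Z = (q^N * inverse q ^ N) * ((d*e)/(d*e)) * (A/A)" unfolding Y_def Z_def by (simp add: field_simps)
    then show ?thesis using q0 A0 d e by (simp add: power_mult_distrib[symmetric])
  qed
  have tm: "Mc q A N d k * (\<Prod>j<k. inverse e - q^j) * Qr q (A*q*inverse e/d) 0 (N-k)
     = Qr q A 1 (N+1) * Qr q X 0 N * (pr q (inverse q ^ N) k * pr q d k * pr q e k / (pr q q k * pr q Y k) * q^k)"
    if k: "k \<le> N" for k
  proof -
    have nYk: "pr q Y k \<noteq> 0" using pr_nz_le[OF nY k] unfolding Y_def .
    have aX: "A*q*inverse e/d = X" unfolding X_def by (simp add: field_simps)
    have key1: "(\<Prod>j<k. - A/d * inverse q ^ j) * (inverse e)^k * q^(N*k) = (\<Prod>j<k. - (Z * inverse q ^ j))"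
    proof -
      have "(\<Prod>j<k. - A/d * inverse q ^ j) * (inverse e)^k * q^(N*k)
          = (\<Prod>j<k. (- A/d * inverse q ^ j) * inverse e * q^N)"
        by (simp only: prod.distrib prod_constant card_lessThan power_mult)
      also have "\<dots> = (\<Prod>j<k. - (Z * inverse q ^ j))"
        by (rule prod.cong) (auto simp: Z_def field_simps)
      finally show ?thesis .
    qed
    have key3: "(\<Prod>j<k. 1 - Z * inverse q ^ j) * Qr q X 0 (N-k) = Qr q X 0 N"
    proof -
      have "Qr q X (N-k) N = (\<Prod>j\<in>{N-k..<N}. 1 - X*q^j)" unfolding Qr_def ..
      also have "\<dots> = (\<Prod>s<N-(N-k). 1 - X*q^(N - Suc s))" by (rule prod_rev_shift) simp
      also have "\<dots> = (\<Prod>s<k. 1 - Z * inverse q ^ s)"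
      proof -
        have "N - (N-k) = k" using k by simp
        moreover have "X*q^(N - Suc s) = Z * inverse q ^ s" if "s < k" for s
        proof -
          have ee: "N = (N - Suc s) + 1 + s" using that k by simp
          have h: "q^((N - Suc s) + 1 + s) = q^(N - Suc s) * q * q^s" by (simp only: power_add power_one_right)
          have sN: "q^N = q^(N - Suc s) * q * q^s" using h[unfolded ee[symmetric]] .
          have "Z * inverse q ^ s = A * (q^(N - Suc s) * q) * (q^s * inverse q ^ s) / (d*e)"
            unfolding Z_def sN by (simp add: field_simps)
          also have "\<dots> = X*q^(N - Suc s)" unfolding X_def using q0 by (simp add: power_mult_distrib[symmetric] field_simps)
          finally show ?thesis by simp
        qed
        ultimately show ?thesis by (auto intro!: prod.cong)
      qed
      finally have "Qr q X (N-k) N = (\<Prod>s<k. 1 - Z * inverse q ^ s)" .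
      then show ?thesis using Qr_split[of 0 "N-k" N q X] k by (simp add: mult.commute)
    qed
    have cancel: "S * P * Q = S * inverse y * ((y * P) * Q)" if "y \<noteq> 0" for S P Q y :: complex
      using that by (simp add: field_simps)
    define S where "S = Qr q A 1 (N+1) * pr q (inverse q ^ N) k * pr q d k * pr q e k * inverse (pr q q k) * q^k"
    have "Mc q A N d k * (\<Prod>j<k. inverse e - q^j) * Qr q (A*q*inverse e/d) 0 (N-k)
        = S * ((\<Prod>j<k. - A/d * inverse q ^ j) * (inverse e)^k * q^(N*k)) * Qr q X 0 (N-k)"
      unfolding Mc_def Dq_split pr_inv_prod[OF e] aX S_def by (simp only: divide_inverse mult_ac)
    also have "\<dots> = S * (\<Prod>j<k. - (Z * inverse q ^ j)) * Qr q X 0 (N-k)" unfolding key1 ..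
    also have "\<dots> = S * inverse (pr q Y k) * ((pr q Y k * (\<Prod>j<k. - (Z * inverse q ^ j))) * Qr q X 0 (N-k))"
      by (rule cancel[OF nYk])
    also have "\<dots> = S * inverse (pr q Y k) * Qr q X 0 N"
      unfolding pr_neg_gen[OF q0 YZ] key3 ..
    also have "\<dots> = Qr q A 1 (N+1) * Qr q X 0 N * (pr q (inverse q ^ N) k * pr q d k * pr q e k / (pr q q k * pr q Y k) * q^k)"
      unfolding S_def by (simp only: divide_inverse inverse_mult_distrib mult_ac)
    finally show ?thesis .
  qed
  have cancel2: "a*b*(C/(a*b)*R) = C*R" if "a \<noteq> 0" "b \<noteq> 0" for a b C R :: complex
    using that by (simp add: field_simps)
  have "RP q A N d (inverse e) = (\<Sum>k\<le>N. Qr q A 1 (N+1) * Qr q X 0 N * (pr q (inverse q ^ N) k * pr q d k * pr q e k / (pr q q k * pr q Y k) * q^k))"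
    unfolding RP_def by (rule sum.cong) (use tm in auto)
  also have "\<dots> = Qr q (A/d) 1 (N+1) * Qr q (A/e) 1 (N+1) * rhsW N d e"
    unfolding rhsW_def X_def[symmetric] Y_def[symmetric] sum_distrib_left[symmetric]
    by (rule cancel2[OF Qd Qe, symmetric])
  finally show ?thesis .
qed

theorem W_identity:
  assumes d: "d \<noteq> 0" and e: "e \<noteq> 0" and Qd: "Qr q (A/d) 1 (N+1) \<noteq> 0" and Qe: "Qr q (A/e) 1 (N+1) \<noteq> 0"
    and nY: "pr q (d*e*inverse q ^ N/A) N \<noteq> 0"
  shows "lhsW N d e = rhsW N d e"
proof -
  have h1: "LP q A N d (inverse e) = Qr q (A/d) 1 (N+1) * Qr q (A/e) 1 (N+1) * lhsW N d e"
    by (rule LP_lhsW[OF d e Qd Qe])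
  have h2: "RP q A N d (inverse e) = Qr q (A/d) 1 (N+1) * Qr q (A/e) 1 (N+1) * rhsW N d e"
    by (rule RP_rhsW[OF d e Qd Qe nY])
  have h3: "LP q A N d (inverse e) = RP q A N d (inverse e)"
    by (rule LP_RP) (use q0 qn A0 An d in auto)
  have "Qr q (A/d) 1 (N+1) * Qr q (A/e) 1 (N+1) * lhsW N d e = Qr q (A/d) 1 (N+1) * Qr q (A/e) 1 (N+1) * rhsW N d e"
    using h1 h2 h3 by metis
  then show ?thesis using Qd Qe by (metis mult_cancel_left mult_eq_0_iff)
qed

end

lemma qinf_conv:
  fixes q x :: complex
  assumes q: "norm q < 1"
  shows "convergent_prod (\<lambda>j. 1 - x*q^j)"
proof -
  have "summable (\<lambda>j. norm x * norm q ^ j)"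
    using q by (intro summable_mult summable_geometric) simp
  then have "summable (\<lambda>j. norm ((1 - x*q^j) - 1))"
    by (simp add: norm_mult norm_power)
  then show ?thesis
    by (intro abs_convergent_prod_imp_convergent_prod summable_imp_abs_convergent_prod)
qed

lemma qinf_lim:
  fixes q x :: complex
  assumes q: "norm q < 1"
  shows "(\<lambda>n. \<Prod>j<n. 1 - x*q^j) \<longlonglongrightarrow> qpoch_inf x q"
proof -
  have c: "(\<lambda>n. \<Prod>j\<le>n. 1 - x*q^j) \<longlonglongrightarrow> prodinf (\<lambda>j. 1 - x*q^j)"
    by (rule convergent_prod_LIMSEQ[OF qinf_conv[OF q]])
  have "(\<lambda>n. \<Prod>j<Suc n. 1 - x*q^j) \<longlonglongrightarrow> prodinf (\<lambda>j. 1 - x*q^j)"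
    using c by (simp add: lessThan_Suc_atMost)
  then have L: "(\<lambda>n. \<Prod>j<n. 1 - x*q^j) \<longlonglongrightarrow> prodinf (\<lambda>j. 1 - x*q^j)"
    by (rule LIMSEQ_imp_Suc)
  then have "qpoch_inf x q = prodinf (\<lambda>j. 1 - x*q^j)"
    unfolding qpoch_inf_def by (rule limI)
  then show ?thesis using L by simp
qed

lemma qinf_prodinf:
  fixes q x :: complex
  assumes q: "norm q < 1"
  shows "qpoch_inf x q = prodinf (\<lambda>j. 1 - x*q^j)"
proof -
  have c: "(\<lambda>n. \<Prod>j\<le>n. 1 - x*q^j) \<longlonglongrightarrow> prodinf (\<lambda>j. 1 - x*q^j)"
    by (rule convergent_prod_LIMSEQ[OF qinf_conv[OF q]])
  have "(\<lambda>n. \<Prod>j<Suc n. 1 - x*q^j) \<longlonglongrightarrow> prodinf (\<lambda>j. 1 - x*q^j)"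
    using c by (simp add: lessThan_Suc_atMost)
  then have L: "(\<lambda>n. \<Prod>j<n. 1 - x*q^j) \<longlonglongrightarrow> prodinf (\<lambda>j. 1 - x*q^j)"
    by (rule LIMSEQ_imp_Suc)
  then show ?thesis unfolding qpoch_inf_def by (rule limI)
qed

lemma qinf_nz:
  fixes q x :: complex
  assumes q: "norm q < 1" and nz: "\<And>j. x*q^j \<noteq> 1"
  shows "qpoch_inf x q \<noteq> 0"
proof -
  have "prodinf (\<lambda>j. 1 - x*q^j) \<noteq> 0"
    by (rule prodinf_nonzero[OF qinf_conv[OF q]]) (use nz in auto)
  moreover have "qpoch_inf x q = prodinf (\<lambda>j. 1 - x*q^j)"
    by (rule qinf_prodinf[OF q])
  ultimately show ?thesis by simp
qed

lemma qinf_split: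
  fixes q x :: complex
  assumes q: "norm q < 1"
  shows "qpoch_inf x q = pr q x n * qpoch_inf (x*q^n) q"
proof -
  have L1: "(\<lambda>m. \<Prod>j<m+n. 1 - x*q^j) \<longlonglongrightarrow> qpoch_inf x q"
    using LIMSEQ_ignore_initial_segment[OF qinf_lim[OF q, of x], where k=n] .
  have e: "(\<Prod>j<m+n. 1 - x*q^j) = pr q x n * (\<Prod>j<m. 1 - (x*q^n)*q^j)" for m
  proof -
    have "(\<Prod>j<m+n. 1 - x*q^j) = (\<Prod>j\<in>{0..<n}. 1 - x*q^j) * (\<Prod>j\<in>{n..<m+n}. 1 - x*q^j)"
      by (simp add: atLeast0LessThan[symmetric] prod.atLeastLessThan_concat)
    also have "(\<Prod>j\<in>{n..<m+n}. 1 - x*q^j) = (\<Prod>j<m. 1 - (x*q^n)*q^j)"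
      using prod.atLeastLessThan_shift_bounds[of "\<lambda>j. 1 - x*q^j" 0 n m]
      by (simp add: atLeast0LessThan comp_def power_add mult_ac)
    finally show ?thesis unfolding pr_def by (simp add: atLeast0LessThan)
  qed
  have L2: "(\<lambda>m. \<Prod>j<m+n. 1 - x*q^j) \<longlonglongrightarrow> pr q x n * qpoch_inf (x*q^n) q"
    unfolding e by (intro tendsto_mult tendsto_const qinf_lim[OF q])
  show ?thesis using L1 L2 LIMSEQ_unique by blast
qed

lemma qpoch_nat: "qpoch a q (int n) = pr q a n"
  unfolding qpoch_def pr_def by simp

lemma qpoch_neg:
  fixes q y :: complex
  assumes q0: "q \<noteq> 0" and y: "y \<noteq> 0"
  shows "qpoch y q (- int m) = inverse ((\<Prod>j<m. - (y * inverse q ^ Suc j)) * pr q (q/y) m)"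
proof (cases "m = 0")
  case True then show ?thesis by (simp add: qpoch_def pr_def)
next
  case False
  have "(\<Prod>j\<in>{1..m}. 1 - y * inverse q ^ j) = (\<Prod>j<m. 1 - y * inverse q ^ Suc j)"
  proof -
    have "(\<Prod>j\<in>{1..m}. 1 - y * inverse q ^ j) = (\<Prod>j\<in>{Suc 0..Suc (m-1)}. 1 - y * inverse q ^ j)"
      using False by simp
    also have "\<dots> = (\<Prod>j\<in>{0..m-1}. 1 - y * inverse q ^ Suc j)"
      by (subst prod.atLeast_Suc_atMost_Suc_shift) (simp add: comp_def)
    also have "\<dots> = (\<Prod>j<m. 1 - y * inverse q ^ Suc j)"
      using False by (intro prod.cong) auto
    finally show ?thesis .
  qed
  also have "\<dots> = (\<Prod>j<m. (- (y * inverse q ^ Suc j)) * (1 - (q/y) * q^j))"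
  proof (rule prod.cong)
    fix j
    define x where "x = inverse q ^ Suc j"
    have qx: "q^Suc j * x = 1" using q0 unfolding x_def by (simp add: power_mult_distrib[symmetric] del: power_Suc)
    have "(- (y * x)) * (1 - (q/y) * q^j) = - (y*x) + (y/y) * (q^Suc j * x)" by (simp add: algebra_simps)
    then show "1 - y * inverse q ^ Suc j = (- (y * inverse q ^ Suc j)) * (1 - (q/y) * q^j)"
      using qx y unfolding x_def by simp
  qed simp
  also have "\<dots> = (\<Prod>j<m. - (y * inverse q ^ Suc j)) * pr q (q/y) m"
    unfolding pr_def by (rule prod.distrib)
  finally show ?thesis unfolding qpoch_def using False by simp
qed

lemma qpoch_neg_ratio:
  fixes q y z :: complex
  assumes q0: "q \<noteq> 0" and y: "y \<noteq> 0" and z: "z \<noteq> 0"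
  shows "qpoch z q (- int m) / qpoch y q (- int m) = (y/z)^m * (pr q (q/y) m / pr q (q/z) m)"
proof -
  define Cy where "Cy = (\<Prod>j<m. - (y * inverse q ^ Suc j))"
  define Cz where "Cz = (\<Prod>j<m. - (z * inverse q ^ Suc j))"
  have C: "Cy / Cz = (y/z)^m"
  proof -
    have "Cy / Cz = (\<Prod>j<m. (- (y * inverse q ^ Suc j)) / (- (z * inverse q ^ Suc j)))"
      unfolding Cy_def Cz_def by (rule prod_dividef[symmetric])
    also have "\<dots> = (\<Prod>j<m. y/z)" by (rule prod.cong) (use q0 in auto)
    finally show ?thesis by simp
  qed
  have "qpoch z q (- int m) / qpoch y q (- int m) = (Cy * pr q (q/y) m) / (Cz * pr q (q/z) m)"
    unfolding qpoch_neg[OF q0 y] qpoch_neg[OF q0 z] Cy_def Cz_def by (simp add: divide_inverse mult.commute)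
  also have "\<dots> = (Cy / Cz) * (pr q (q/y) m / pr q (q/z) m)" by (rule times_divide_times_eq[symmetric])
  finally show ?thesis unfolding C .
qed

lemma qpow_ne1:
  fixes q :: complex
  assumes "cmod q < 1" "m \<ge> 1"
  shows "q^m \<noteq> 1"
proof
  assume "q^m = 1"
  then have "cmod q ^ m = 1" by (metis norm_one norm_power)
  moreover have "cmod q ^ m < 1" using assms by (simp add: power_less_one_iff)
  ultimately show False by simp
qed

theorem W_full:
  fixes q A d e :: complex
  assumes q0: "q \<noteq> 0" and qn: "\<And>m. m \<ge> 1 \<Longrightarrow> q^m \<noteq> 1"
    and A0: "A \<noteq> 0" and An: "\<And>j. j \<ge> 1 \<Longrightarrow> A*q^j \<noteq> 1"
    and d: "d \<noteq> 0" and e: "e \<noteq> 0" and Qd: "Qr q (A/d) 1 (N+1) \<noteq> 0" and Qe: "Qr q (A/e) 1 (N+1) \<noteq> 0"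
    and nY: "pr q (d*e*inverse q ^ N/A) N \<noteq> 0"
  shows "(\<Sum>m\<le>N. cc q A m * (pr q (inverse q ^ N) m * pr q d m * pr q e m
      / (Qr q A (N+1) (N+1+m) * pr q (A*q/d) m * pr q (A*q/e) m)) * (A^2*q^(N+2)/(d*e))^m * q^(m^2-m))
    = Qr q A 1 (N+1) * Qr q (A*q/(d*e)) 0 N / (Qr q (A/d) 1 (N+1) * Qr q (A/e) 1 (N+1))
     * (\<Sum>k\<le>N. pr q (inverse q ^ N) k * pr q d k * pr q e k / (pr q q k * pr q (d*e*inverse q ^ N/A) k) * q^k)"
proof -
  have h: "lhsW q A N d e = rhsW q A N d e" by (rule W_identity) (use assms in auto)
  have l: "lhsW q A N d e = (\<Sum>m\<le>N. cc q A m * (pr q (inverse q ^ N) m * pr q d m * pr q e m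
      / (Qr q A (N+1) (N+1+m) * pr q (A*q/d) m * pr q (A*q/e) m)) * (A^2*q^(N+2)/(d*e))^m * q^(m^2-m))"
    by (rule lhsW_def) (use assms in auto)
  have r: "rhsW q A N d e = Qr q A 1 (N+1) * Qr q (A*q/(d*e)) 0 N / (Qr q (A/d) 1 (N+1) * Qr q (A/e) 1 (N+1))
     * (\<Sum>k\<le>N. pr q (inverse q ^ N) k * pr q d k * pr q e k / (pr q q k * pr q (d*e*inverse q ^ N/A) k) * q^k)"
    by (rule rhsW_def) (use assms in auto)
  show ?thesis using h l r by simp
qed

lemma prod3_div: "(x1*x2*x3) / (y1*y2*y3) = (x1/y1)*(x2/y2)*(x3/(y3::complex))"
  by (simp add: times_divide_times_eq)

lemma qa_inv: "q \<noteq> 0 \<Longrightarrow> q / q^(Suc N) = inverse q ^ N"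
  for q :: complex by (simp add: field_simps power_inverse)

lemma pr_qa_zero:
  fixes q :: complex
  assumes "q \<noteq> 0" "N < m"
  shows "pr q (inverse q ^ N) m = 0"
  by (rule pr_zero[of N]) (use assms in \<open>auto simp: power_mult_distrib[symmetric]\<close>)

lemma pr_shiftN: "pr q (x*q^s) m = Qr q x s (s+m)"
  unfolding pr_Qr using Qr_shift[of q x s 0 m] by (simp add: add.commute)

definition S1 :: "complex \<Rightarrow> complex \<Rightarrow> complex \<Rightarrow> complex \<Rightarrow> int \<Rightarrow> complex" where
  "S1 q a b c k = qpoch (q/a) q k * qpoch (q/b) q k * qpoch (q/c) q k
                    / (qpoch a q k * qpoch b q k * qpoch c q k)
                    * (a*b*c) powi k * q powi (k^2 - 2*k)"

lemma S1_pos: "S1 q a b c (int m) = pr q (q/a) m * pr q (q/b) m * pr q (q/c) m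
   / (pr q a m * pr q b m * pr q c m) * (a*b*c)^m * q powi (int m^2 - 2*int m)"
  unfolding S1_def qpoch_nat by (simp add: power_int_of_nat)

lemma S1_neg:
  fixes q a b c :: complex
  assumes q0: "q \<noteq> 0" and a: "a \<noteq> 0" and b: "b \<noteq> 0" and c: "c \<noteq> 0"
  shows "S1 q a b c (- int m) = q^m * S1 q a b c (int m)"
proof -
  have rat: "qpoch (q/x) q (- int m) / qpoch x q (- int m) = (x*x/q)^m * (pr q (q/x) m / pr q x m)"
    if x: "x \<noteq> 0" for x
  proof -
    have "qpoch (q/x) q (- int m) / qpoch x q (- int m) = (x/(q/x))^m * (pr q (q/x) m / pr q (q/(q/x)) m)"
      by (rule qpoch_neg_ratio) (use q0 x in auto)
    moreover have "q/(q/x) = x" "x/(q/x) = x*x/q" using q0 x by auto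
    ultimately show ?thesis by simp
  qed
  define R where "R = (pr q (q/a) m / pr q a m) * (pr q (q/b) m / pr q b m) * (pr q (q/c) m / pr q c m)"
  have e1: "S1 q a b c (- int m) = R * ((a*a/q)^m * (b*b/q)^m * (c*c/q)^m * (a*b*c) powi (- int m) * q powi ((- int m)^2 - 2*(- int m)))"
  proof -
    have "S1 q a b c (- int m) = (qpoch (q/a) q (- int m) / qpoch a q (- int m)) * (qpoch (q/b) q (- int m) / qpoch b q (- int m))
        * (qpoch (q/c) q (- int m) / qpoch c q (- int m)) * (a*b*c) powi (- int m) * q powi ((- int m)^2 - 2*(- int m))"
      unfolding S1_def prod3_div ..
    then show ?thesis unfolding rat[OF a] rat[OF b] rat[OF c] R_def by (simp only: mult_ac)
  qed
  have e2: "S1 q a b c (int m) = R * ((a*b*c)^m * q powi (int m^2 - 2*int m))"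
    unfolding S1_pos prod3_div R_def by (simp only: mult_ac)
  have p1: "(a*b*c) powi (- int m) = inverse ((a*b*c)^m)" by (simp add: power_int_minus power_int_of_nat)
  have p2: "q powi ((- int m)^2 - 2*(- int m)) = q^(m^2) * q^(2*m)"
  proof -
    have eq: "(- int m)^2 - 2*(- int m) = int (m^2 + 2*m)" by (simp add: power2_eq_square)
    show ?thesis unfolding eq power_int_of_nat power_add ..
  qed
  have p3: "q powi (int m^2 - 2*int m) = q^(m^2) / q^(2*m)"
  proof -
    have eq: "int m^2 - 2*int m = int (m^2) - int (2*m)" by simp
    show ?thesis unfolding eq power_int_diff[OF disjI1[OF q0]] power_int_of_nat ..
  qed
  have "(a*a/q)^m * (b*b/q)^m * (c*c/q)^m * (a*b*c) powi (- int m) * q powi ((- int m)^2 - 2*(- int m))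
      = q^m * ((a*b*c)^m * q powi (int m^2 - 2*int m))"
    unfolding p1 p2 p3 using q0 a b c
    by (simp add: field_simps power_mult_distrib power_add mult_2 mult_2_right)
  then show ?thesis unfolding e1 e2 by simp
qed

definition S2 :: "complex \<Rightarrow> complex \<Rightarrow> complex \<Rightarrow> complex \<Rightarrow> int \<Rightarrow> complex" where
  "S2 q a b c k = qpoch (q/a) q k * qpoch (q/b) q k * qpoch (q/c) q k
                    / (qpoch (a*q) q k * qpoch (b*q) q k * qpoch (c*q) q k)
                    * (a*b*c) powi k * q powi (k^2)"

lemma S2_pos: "S2 q a b c (int m) = pr q (q/a) m * pr q (q/b) m * pr q (q/c) m
   / (pr q (a*q) m * pr q (b*q) m * pr q (c*q) m) * (a*b*c)^m * q^(m^2)"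
proof -
  have eq: "(int m)^2 = int (m^2)" by simp
  show ?thesis unfolding S2_def qpoch_nat eq power_int_of_nat ..
qed

lemma S2_neg:
  fixes q a b c :: complex
  assumes q0: "q \<noteq> 0" and a: "a \<noteq> 0" "a \<noteq> 1" and b: "b \<noteq> 0" "b \<noteq> 1" and c: "c \<noteq> 0" "c \<noteq> 1"
  shows "S2 q a b c (- int m - 1) = - (q^(2*m+1)) * S2 q a b c (int m)"
proof -
  have rat: "qpoch (q/x) q (- int (Suc m)) / qpoch (x*q) q (- int (Suc m)) = - (x^(2*m+1)) * (pr q (q/x) m / pr q (x*q) m)"
    if x: "x \<noteq> 0" "x \<noteq> 1" for x
  proof -
    have "qpoch (q/x) q (- int (Suc m)) / qpoch (x*q) q (- int (Suc m))
        = (x*q/(q/x))^(Suc m) * (pr q (q/(x*q)) (Suc m) / pr q (q/(q/x)) (Suc m))"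
      by (rule qpoch_neg_ratio) (use q0 x in auto)
    moreover have "q/(q/x) = x" "x*q/(q/x) = x*x" "q/(x*q) = 1/x" using q0 x by auto
    moreover have "pr q (1/x) (Suc m) = (1 - 1/x) * pr q (q/x) m" using pr_Suc'[of q "1/x" m] by simp
    moreover have "pr q x (Suc m) = (1 - x) * pr q (x*q) m" using pr_Suc'[of q x m] by simp
    ultimately have hA: "qpoch (q/x) q (- int (Suc m)) / qpoch (x*q) q (- int (Suc m))
        = ((x*x)^(Suc m) * ((1 - 1/x) / (1 - x))) * (pr q (q/x) m / pr q (x*q) m)"
      by (simp add: times_divide_times_eq mult.assoc)
    have hK: "(x*x)^(Suc m) * ((1 - 1/x) / (1 - x)) = - (x^(2*m+1))"
    proof -
      have "1 - x \<noteq> 0" using x by simp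
      then have "(1 - 1/x) / (1 - x) = - (1/x)" using x by (simp add: field_simps)
      then show ?thesis using x by (simp add: power_mult_distrib mult_2 mult_2_right power_add field_simps)
    qed
    show ?thesis using hA unfolding hK .
  qed
  define R where "R = (pr q (q/a) m / pr q (a*q) m) * (pr q (q/b) m / pr q (b*q) m) * (pr q (q/c) m / pr q (c*q) m)"
  have mm: "- int m - 1 = - int (Suc m)" by simp
  have e1: "S2 q a b c (- int m - 1) = R * (- (a^(2*m+1)) * - (b^(2*m+1)) * - (c^(2*m+1))
       * (a*b*c) powi (- int (Suc m)) * q powi ((- int (Suc m))^2))"
  proof -
    have "S2 q a b c (- int (Suc m)) = (qpoch (q/a) q (- int (Suc m)) / qpoch (a*q) q (- int (Suc m)))
        * (qpoch (q/b) q (- int (Suc m)) / qpoch (b*q) q (- int (Suc m)))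
        * (qpoch (q/c) q (- int (Suc m)) / qpoch (c*q) q (- int (Suc m)))
        * (a*b*c) powi (- int (Suc m)) * q powi ((- int (Suc m))^2)"
      unfolding S2_def prod3_div ..
    then show ?thesis unfolding mm rat[OF a] rat[OF b] rat[OF c] R_def by (simp only: mult_ac)
  qed
  have e2: "S2 q a b c (int m) = R * ((a*b*c)^m * q^(m^2))"
    unfolding S2_pos prod3_div R_def by (simp only: mult_ac)
  have p1: "(a*b*c) powi (- int (Suc m)) = inverse ((a*b*c)^(Suc m))"
    by (simp add: power_int_minus power_int_of_nat del: of_nat_Suc)
  have p2: "q powi ((- int (Suc m))^2) = q^(m^2) * q^(2*m+1)"
  proof -
    have eq: "(- int (Suc m))^2 = int (m^2 + (2*m+1))" by (simp add: power2_eq_square algebra_simps)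
    show ?thesis unfolding eq power_int_of_nat power_add ..
  qed
  have "- (a^(2*m+1)) * - (b^(2*m+1)) * - (c^(2*m+1)) * (a*b*c) powi (- int (Suc m)) * q powi ((- int (Suc m))^2)
      = - (q^(2*m+1)) * ((a*b*c)^m * q^(m^2))"
    unfolding p1 p2 using q0 a b c
    by (simp add: field_simps power_mult_distrib power_add mult_2 mult_2_right)
  then show ?thesis unfolding e1 e2 by simp
qed

context
  fixes q b c :: complex and N :: nat
  assumes q0l: "0 < cmod q" and q1: "cmod q < 1" and b0: "b \<noteq> 0" and c0: "c \<noteq> 0"
    and wb: "\<And>j. b*q^j \<noteq> 1" and wc: "\<And>j. c*q^j \<noteq> 1"
    and wabc: "\<And>m::int. q^Suc N * b * c \<noteq> q powi m"
begin

lemma q0: "q \<noteq> 0" using q0l by auto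

lemma qn: "m \<ge> 1 \<Longrightarrow> q^m \<noteq> 1" using qpow_ne1[OF q1] by auto

lemma wabc_nat: "q^Suc N * b * c \<noteq> q^k"
  using wabc[of "int k"] by (simp add: power_int_of_nat)

lemma S1_zero: "N < m \<Longrightarrow> S1 q (q^Suc N) b c (int m) = 0"
  unfolding S1_pos qa_inv[OF q0] using pr_qa_zero[OF q0] by simp

lemma S1_hassum:
  "(S1 q (q^Suc N) b c has_sum (\<Sum>m\<le>N. cc q 1 m * S1 q (q^Suc N) b c (int m))) UNIV"
proof (rule has_sum_finite_neutralI[where B="{- int N..int N}"])
  define f where "f = S1 q (q^Suc N) b c"
  have a0: "q^Suc N \<noteq> 0" using q0 by simp
  have neg: "f (- int m) = q^m * f (int m)" for m
    unfolding f_def by (rule S1_neg[OF q0 a0 b0 c0])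
  show "finite {- int N..int N}" by simp
  show "{- int N..int N} \<subseteq> UNIV" by simp
  show "f x = 0" if "x \<in> UNIV - {- int N..int N}" for x
  proof (cases "x \<ge> 0")
    case True
    then obtain m where m: "x = int m" by (metis nonneg_eq_int)
    then have "N < m" using that by auto
    then show ?thesis unfolding m f_def by (rule S1_zero)
  next
    case False
    then obtain m where m: "x = - int m" by (metis minus_minus neg_0_le_iff_le nonneg_eq_int linorder_linear)
    then have Nm: "N < m" using that by auto
    have "f (int m) = 0" unfolding f_def by (rule S1_zero[OF Nm])
    then show ?thesis unfolding m neg by simp
  qed
  have split: "{- int N..int N} = int ` {..N} \<union> (\<lambda>m. - int m) ` {1..N}"
  proof (intro equalityI subsetI)
    fix x assume x: "x \<in> {- int N..int N}"
    show "x \<in> int ` {..N} \<union> (\<lambda>m. - int m) ` {1..N}"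
    proof (cases "x \<ge> 0")
      case True
      then obtain m where "x = int m" by (metis nonneg_eq_int)
      then show ?thesis using x by auto
    next
      case False
      then obtain m where m: "x = - int m" "m \<ge> 1"
        by (metis add.inverse_inverse linorder_not_le neg_0_less_iff_less nat_0_less_mult_iff
            nonneg_eq_int order_less_imp_le zero_less_imp_eq_int of_nat_0_less_iff less_one
            linorder_le_less_linear not_less int_one_le_iff_zero_less)
      then show ?thesis using x by (auto intro!: imageI)
    qed
  qed auto
  have disj: "int ` {..N} \<inter> (\<lambda>m. - int m) ` {1..N} = {}" by auto
  have "(\<Sum>x\<in>{- int N..int N}. f x) = (\<Sum>x\<in>int ` {..N}. f x) + (\<Sum>x\<in>(\<lambda>m. - int m) ` {1..N}. f x)"
    unfolding split by (rule sum.union_disjoint) (use disj in auto)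
  also have "(\<Sum>x\<in>int ` {..N}. f x) = (\<Sum>m\<le>N. f (int m))"
    by (subst sum.reindex) (auto simp: inj_on_def)
  also have "(\<Sum>x\<in>(\<lambda>m. - int m) ` {1..N}. f x) = (\<Sum>m\<in>{1..N}. f (- int m))"
    by (subst sum.reindex) (auto simp: inj_on_def)
  also have "\<dots> = (\<Sum>m\<le>N. (if m = 0 then 0 else q^m) * f (int m))"
  proof -
    have "(\<Sum>m\<le>N. (if m = 0 then 0 else q^m) * f (int m)) = (\<Sum>m\<in>{1..N}. (if m = 0 then 0 else q^m) * f (int m))"
      by (rule sum.mono_neutral_right) auto
    also have "\<dots> = (\<Sum>m\<in>{1..N}. f (- int m))" by (rule sum.cong) (auto simp: neg)
    finally show ?thesis by simp
  qed
  also have "(\<Sum>m\<le>N. f (int m)) + (\<Sum>m\<le>N. (if m = 0 then 0 else q^m) * f (int m))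
      = (\<Sum>m\<le>N. cc q 1 m * f (int m))"
  proof -
    have cc1: "cc q 1 m = 1 + (if m = 0 then 0 else q^m)" for m
    proof (cases "m = 0")
      case True then show ?thesis by (simp add: cc_def)
    next
      case False
      have p: "pr q q m = Qr q 1 1 m * (1 - q^m)"
        using pr_shift1[of q 1 m] Qr_Suc[of 1 m q 1] False by simp
      have nz: "Qr q 1 1 m \<noteq> 0" by (rule Qr_nz) (use qn in auto)
      have nz2: "1 - q^m \<noteq> 0" using qn[of m] False by simp
      have "1 - q^(2*m) = (1 - q^m) * (1 + q^m)" by (simp add: algebra_simps mult_2 mult_2_right power_add)
      then show ?thesis unfolding cc_def p using False nz nz2 by (simp add: field_simps)
    qed
    show ?thesis unfolding cc1 by (simp add: sum.distrib[symmetric] algebra_simps)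
  qed
  finally show "(\<Sum>m\<le>N. cc q 1 m * S1 q (q^Suc N) b c (int m)) = (\<Sum>x\<in>{- int N..int N}. S1 q (q^Suc N) b c x)"
    unfolding f_def by simp
qed


lemma pq2: "q powi (int m^2 - 2*int m) = q^(m^2) / q^(2*m)"
proof -
  have eq: "int m^2 - 2*int m = int (m^2) - int (2*m)" by simp
  show ?thesis unfolding eq power_int_diff[OF disjI1[OF q0]] power_int_of_nat ..
qed

lemma pq3: "q^(m^2 - m) = q^(m^2) / q^m"
proof -
  have "m \<le> m^2" by (simp add: power2_eq_square)
  then show ?thesis using q0 by (simp add: power_diff)
qed

lemma S1_term:
  "S1 q (q^Suc N) b c (int m) = pr q (inverse q ^ N) m * pr q (q/b) m * pr q (q/c) m
      / (Qr q 1 (N+1) (N+1+m) * pr q (1*q/(q/b)) m * pr q (1*q/(q/c)) m) * (1^2*q^(N+2)/((q/b)*(q/c)))^m * q^(m^2-m)"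
proof -
  have e1: "pr q (q^Suc N) m = Qr q 1 (N+1) (N+1+m)" using pr_shiftN[of q 1 "N+1" m] by simp
  have e2: "1*q/(q/b) = b" "1*q/(q/c) = c" using q0 b0 c0 by auto
  have e3: "(q^Suc N * b * c)^m * q powi (int m^2 - 2*int m) = (1^2*q^(N+2)/((q/b)*(q/c)))^m * q^(m^2-m)"
    unfolding pq2 pq3 using q0 b0 c0 by (simp add: field_simps power_mult_distrib power_add mult_2 mult_2_right)
  have "S1 q (q^Suc N) b c (int m) = pr q (inverse q ^ N) m * pr q (q/b) m * pr q (q/c) m
      / (Qr q 1 (N+1) (N+1+m) * pr q b m * pr q c m) * ((q^Suc N * b * c)^m * q powi (int m^2 - 2*int m))"
    unfolding S1_pos qa_inv[OF q0] e1 by (simp only: mult.assoc)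
  then show ?thesis unfolding e3 e2 by (simp only: mult.assoc)
qed

lemma LHS1: "(\<Sum>m\<le>N. cc q 1 m * S1 q (q^Suc N) b c (int m)) =
   (\<Sum>m\<le>N. cc q 1 m * (pr q (inverse q ^ N) m * pr q (q/b) m * pr q (q/c) m
      / (Qr q 1 (N+1) (N+1+m) * pr q (1*q/(q/b)) m * pr q (1*q/(q/c)) m)) * (1^2*q^(N+2)/((q/b)*(q/c)))^m * q^(m^2-m))"
proof (rule sum.cong)
  fix m
  show "cc q 1 m * S1 q (q^Suc N) b c (int m) = cc q 1 m * (pr q (inverse q ^ N) m * pr q (q/b) m * pr q (q/c) m
      / (Qr q 1 (N+1) (N+1+m) * pr q (1*q/(q/b)) m * pr q (1*q/(q/c)) m)) * (1^2*q^(N+2)/((q/b)*(q/c)))^m * q^(m^2-m)"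
    by (subst S1_term) (simp only: mult.assoc)
qed simp

lemma Qd1: "Qr q (1/(q/b)) 1 (N+1) \<noteq> 0"
proof (rule Qr_nz)
  fix t assume t: "1 \<le> t" "t < N+1"
  then obtain s where s: "t = Suc s" by (cases t) auto
  have "1/(q/b) * q^t = b*q^s" unfolding s using q0 by (simp add: field_simps)
  then show "1/(q/b) * q^t \<noteq> 1" using wb[of s] by simp
qed

lemma Qe1: "Qr q (1/(q/c)) 1 (N+1) \<noteq> 0"
proof (rule Qr_nz)
  fix t assume t: "1 \<le> t" "t < N+1"
  then obtain s where s: "t = Suc s" by (cases t) auto
  have "1/(q/c) * q^t = c*q^s" unfolding s using q0 by (simp add: field_simps)
  then show "1/(q/c) * q^t \<noteq> 1" using wc[of s] by simp
qed

lemma nY1: "pr q ((q/b)*(q/c)*inverse q ^ N/1) N \<noteq> 0"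
proof (rule pr_nz)
  fix t assume t: "t < N"
  show "(q/b)*(q/c)*inverse q ^ N/1 * q^t \<noteq> 1"
  proof
    assume h: "(q/b)*(q/c)*inverse q ^ N/1 * q^t = 1"
    have w: "q^N * inverse q ^ N = 1" using q0 by (simp add: power_mult_distrib[symmetric])
    have "q^Suc N * b * c = q^Suc N * b * c * ((q/b)*(q/c)*inverse q ^ N/1 * q^t)" using h by simp
    also have "\<dots> = q^(t+3) * (q^N * inverse q ^ N)" using b0 c0 q0
      by (simp add: field_simps power_add eval_nat_numeral)
    finally show False using w wabc_nat[of "t+3"] by simp
  qed
qed

lemma W1: "(\<Sum>m\<le>N. cc q 1 m * S1 q (q^Suc N) b c (int m)) =
    Qr q 1 1 (N+1) * Qr q (1*q/((q/b)*(q/c))) 0 N / (Qr q (1/(q/b)) 1 (N+1) * Qr q (1/(q/c)) 1 (N+1))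
     * (\<Sum>k\<le>N. pr q (inverse q ^ N) k * pr q (q/b) k * pr q (q/c) k / (pr q q k * pr q ((q/b)*(q/c)*inverse q ^ N/1) k) * q^k)"
  unfolding LHS1
  by (rule W_full[OF q0 qn _ _ _ _ Qd1 Qe1 nY1]) (use q0 b0 c0 qn in auto)


lemma qinf_nz_shift: "(\<And>j. x*q^j \<noteq> 1) \<Longrightarrow> qpoch_inf x q \<noteq> 0"
  by (rule qinf_nz[OF q1])

lemma pref1:
  defines "a \<equiv> q^Suc N"
  shows "qpoch_inf q q * qpoch_inf (a*b/q) q * qpoch_inf (b*c/q) q * qpoch_inf (a*c/q) q
            / (qpoch_inf a q * qpoch_inf b q * qpoch_inf c q * qpoch_inf (a*b*c/q^2) q)
       = pr q q N * pr q (b*c/q) N / (pr q b N * pr q c N)"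
proof -
  have s1: "qpoch_inf q q = pr q q N * qpoch_inf a q"
    using qinf_split[OF q1, of q N] unfolding a_def by simp
  have s2: "qpoch_inf b q = pr q b N * qpoch_inf (a*b/q) q"
  proof -
    have "a*b/q = b*q^N" unfolding a_def using q0 by simp
    then show ?thesis using qinf_split[OF q1, of b N] by simp
  qed
  have s3: "qpoch_inf c q = pr q c N * qpoch_inf (a*c/q) q"
  proof -
    have "a*c/q = c*q^N" unfolding a_def using q0 by simp
    then show ?thesis using qinf_split[OF q1, of c N] by simp
  qed
  have s4: "qpoch_inf (b*c/q) q = pr q (b*c/q) N * qpoch_inf (a*b*c/q^2) q"
  proof -
    have "a*b*c/q^2 = (b*c/q)*q^N" unfolding a_def using q0 by (simp add: field_simps power2_eq_square)
    then show ?thesis using qinf_split[OF q1, of "b*c/q" N] by simp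
  qed
  have n1: "qpoch_inf a q \<noteq> 0"
  proof (rule qinf_nz_shift)
    fix j show "a*q^j \<noteq> 1" unfolding a_def using qn[of "Suc N + j"] by (simp add: power_add mult.assoc)
  qed
  have n2: "qpoch_inf (a*b/q) q \<noteq> 0"
  proof (rule qinf_nz_shift)
    fix j have "a*b/q*q^j = b*q^(N+j)" unfolding a_def using q0 by (simp add: power_add)
    then show "a*b/q*q^j \<noteq> 1" using wb[of "N+j"] by simp
  qed
  have n3: "qpoch_inf (a*c/q) q \<noteq> 0"
  proof (rule qinf_nz_shift)
    fix j have "a*c/q*q^j = c*q^(N+j)" unfolding a_def using q0 by (simp add: power_add)
    then show "a*c/q*q^j \<noteq> 1" using wc[of "N+j"] by simp
  qed
  have n4: "qpoch_inf (a*b*c/q^2) q \<noteq> 0"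
  proof (rule qinf_nz_shift)
    fix j show "a*b*c/q^2*q^j \<noteq> 1"
    proof
      assume h: "a*b*c/q^2*q^j = 1"
      have "q powi (2 - int j) = q^2 / q^j"
        using power_int_diff[OF disjI1[OF q0], of 2 "int j"] by (simp add: power_int_of_nat)
      also have "\<dots> = a*b*c" using h q0 by (simp add: field_simps)
      finally show False using wabc[of "2 - int j"] unfolding a_def by (simp add: mult.assoc)
    qed
  qed
  show ?thesis unfolding s1 s2 s3 s4 using n1 n2 n3 n4 by (simp add: field_simps)
qed

lemma RHSsum1:
  defines "a \<equiv> q^Suc N"
  shows "(\<Sum>k::nat. qpoch (q/a) q (int k) * qpoch (q/b) q (int k) * qpoch (q/c) q (int k)
                 / (qpoch q q (int k) * qpoch (q^3/(a*b*c)) q (int k)) * q ^ k)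
     = (\<Sum>k\<le>N. pr q (inverse q ^ N) k * pr q (q/b) k * pr q (q/c) k / (pr q q k * pr q ((q/b)*(q/c)*inverse q ^ N/1) k) * q^k)"
proof -
  have qa: "q/a = inverse q ^ N" unfolding a_def by (rule qa_inv[OF q0])
  have q3: "q^3/(a*b*c) = (q/b)*(q/c)*inverse q ^ N/1"
    unfolding a_def using q0 b0 c0 by (simp add: field_simps power_inverse eval_nat_numeral)
  have "(\<Sum>k::nat. qpoch (q/a) q (int k) * qpoch (q/b) q (int k) * qpoch (q/c) q (int k)
                 / (qpoch q q (int k) * qpoch (q^3/(a*b*c)) q (int k)) * q ^ k)
      = (\<Sum>k\<in>{..N}. qpoch (q/a) q (int k) * qpoch (q/b) q (int k) * qpoch (q/c) q (int k)
                 / (qpoch q q (int k) * qpoch (q^3/(a*b*c)) q (int k)) * q ^ k)"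
    by (rule suminf_finite) (use pr_qa_zero[OF q0] in \<open>auto simp: qpoch_nat qa\<close>)
  then show ?thesis unfolding qpoch_nat qa q3 by simp
qed

lemma RHS1:
  defines "a \<equiv> q^Suc N"
  shows "qpoch_inf q q * qpoch_inf (a*b/q) q * qpoch_inf (b*c/q) q * qpoch_inf (a*c/q) q
            / (qpoch_inf a q * qpoch_inf b q * qpoch_inf c q * qpoch_inf (a*b*c/q^2) q)
            * (\<Sum>k::nat. qpoch (q/a) q (int k) * qpoch (q/b) q (int k) * qpoch (q/c) q (int k)
                 / (qpoch q q (int k) * qpoch (q^3/(a*b*c)) q (int k)) * q ^ k)
      = (\<Sum>m\<le>N. cc q 1 m * S1 q (q^Suc N) b c (int m))"
proof -
  have e1: "Qr q 1 1 (N+1) = pr q q N" using pr_shift1[of q 1 N] by simp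
  have e2: "Qr q (1*q/((q/b)*(q/c))) 0 N = pr q (b*c/q) N"
  proof -
    have "1*q/((q/b)*(q/c)) = b*c/q" using q0 b0 c0 by (simp add: field_simps power2_eq_square)
    then show ?thesis by (simp add: pr_Qr)
  qed
  have e3: "Qr q (1/(q/b)) 1 (N+1) = pr q b N"
  proof -
    have "1/(q/b)*q = b" using q0 by simp
    then show ?thesis using pr_shift1[of q "1/(q/b)" N] by simp
  qed
  have e4: "Qr q (1/(q/c)) 1 (N+1) = pr q c N"
  proof -
    have "1/(q/c)*q = c" using q0 by simp
    then show ?thesis using pr_shift1[of q "1/(q/c)" N] by simp
  qed
  show ?thesis unfolding W1 e1 e2 e3 e4 pref1[folded a_def] RHSsum1[folded a_def] ..
qed

theorem ident1:
  defines "a \<equiv> q^Suc N"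
  shows "((\<lambda>k::int. qpoch (q/a) q k * qpoch (q/b) q k * qpoch (q/c) q k
                    / (qpoch a q k * qpoch b q k * qpoch c q k)
                    * (a*b*c) powi k * q powi (k^2 - 2*k))
         has_sum
           (qpoch_inf q q * qpoch_inf (a*b/q) q * qpoch_inf (b*c/q) q * qpoch_inf (a*c/q) q
            / (qpoch_inf a q * qpoch_inf b q * qpoch_inf c q * qpoch_inf (a*b*c/q^2) q)
            * (\<Sum>k::nat. qpoch (q/a) q (int k) * qpoch (q/b) q (int k) * qpoch (q/c) q (int k)
                 / (qpoch q q (int k) * qpoch (q^3/(a*b*c)) q (int k)) * q ^ k))) UNIV"
proof -
  have h: "(S1 q (q^Suc N) b c has_sum
           (qpoch_inf q q * qpoch_inf (a*b/q) q * qpoch_inf (b*c/q) q * qpoch_inf (a*c/q) q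
            / (qpoch_inf a q * qpoch_inf b q * qpoch_inf c q * qpoch_inf (a*b*c/q^2) q)
            * (\<Sum>k::nat. qpoch (q/a) q (int k) * qpoch (q/b) q (int k) * qpoch (q/c) q (int k)
                 / (qpoch q q (int k) * qpoch (q^3/(a*b*c)) q (int k)) * q ^ k))) UNIV"
    unfolding a_def RHS1 by (rule S1_hassum)
  show ?thesis using h unfolding S1_def a_def .
qed


lemma S2_zero: "N < m \<Longrightarrow> S2 q (q^Suc N) b c (int m) = 0"
  unfolding S2_pos qa_inv[OF q0] using pr_qa_zero[OF q0] by simp

lemma b1: "b \<noteq> 1" using wb[of 0] by auto
lemma c1: "c \<noteq> 1" using wc[of 0] by auto

lemma S2_hassum:
  "(S2 q (q^Suc N) b c has_sum ((1 - q) * (\<Sum>m\<le>N. cc q q m * S2 q (q^Suc N) b c (int m)))) UNIV"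
proof (rule has_sum_finite_neutralI[where B="{- int N - 1..int N}"])
  define f where "f = S2 q (q^Suc N) b c"
  have a0: "q^Suc N \<noteq> 0" using q0 by simp
  have a1: "q^Suc N \<noteq> 1" using qn[of "Suc N"] by simp
  have neg: "f (- int m - 1) = - (q^(2*m+1)) * f (int m)" for m
    unfolding f_def by (rule S2_neg[OF q0 a0 a1 b0 b1 c0 c1])
  show "finite {- int N - 1..int N}" by simp
  show "{- int N - 1..int N} \<subseteq> UNIV" by simp
  show "f x = 0" if "x \<in> UNIV - {- int N - 1..int N}" for x
  proof (cases "x \<ge> 0")
    case True
    then obtain m where m: "x = int m" by (metis nonneg_eq_int)
    then have "N < m" using that by auto
    then show ?thesis unfolding m f_def by (rule S2_zero)
  next
    case False
    then obtain m where m: "x = - int m - 1"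
    proof -
      have "- x - 1 \<ge> 0" using False by simp
      then obtain m where "- x - 1 = int m" by (metis nonneg_eq_int)
      then have "x = - int m - 1" by simp
      then show ?thesis using that by blast
    qed
    then have Nm: "N < m" using that by auto
    have "f (int m) = 0" unfolding f_def by (rule S2_zero[OF Nm])
    then show ?thesis unfolding m neg by simp
  qed
  have split: "{- int N - 1..int N} = int ` {..N} \<union> (\<lambda>m. - int m - 1) ` {..N}"
  proof (intro equalityI subsetI)
    fix x assume x: "x \<in> {- int N - 1..int N}"
    show "x \<in> int ` {..N} \<union> (\<lambda>m. - int m - 1) ` {..N}"
    proof (cases "x \<ge> 0")
      case True
      then obtain m where "x = int m" by (metis nonneg_eq_int)
      then show ?thesis using x by auto
    next
      case False
      have "- x - 1 \<ge> 0" using False by simp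
      then obtain m where m: "- x - 1 = int m" by (metis nonneg_eq_int)
      then have "x = - int m - 1" "m \<le> N" using x by auto
      then show ?thesis by auto
    qed
  qed auto
  have disj: "int ` {..N} \<inter> (\<lambda>m. - int m - 1) ` {..N} = {}" by auto
  have cc2: "cc q q m = (1 - q^(2*m+1)) / (1 - q)" for m
  proof (cases m)
    case 0
    have "1 - q \<noteq> 0" using qn[of 1] by simp
    then show ?thesis using 0 by (simp add: cc_def)
  next
    case (Suc k)
    have p: "pr q q m = (1 - q) * Qr q q 1 m"
      using pr_Suc'[of q q k] pr_shift1[of q q k] Suc by simp
    have nz: "Qr q q 1 m \<noteq> 0"
    proof (rule Qr_nz)
      fix t :: nat assume "1 \<le> t" "t < m" show "q*q^t \<noteq> 1" using qn[of "Suc t"] by simp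
    qed
    have "1 - q \<noteq> 0" using qn[of 1] by simp
    then show ?thesis unfolding cc_def p using Suc nz by (simp add: field_simps)
  qed
  have q1n: "1 - q \<noteq> 0" using qn[of 1] by simp
  have "(\<Sum>x\<in>{- int N - 1..int N}. f x) = (\<Sum>x\<in>int ` {..N}. f x) + (\<Sum>x\<in>(\<lambda>m. - int m - 1) ` {..N}. f x)"
    unfolding split by (rule sum.union_disjoint) (use disj in auto)
  also have "(\<Sum>x\<in>int ` {..N}. f x) = (\<Sum>m\<le>N. f (int m))"
    by (subst sum.reindex) (auto simp: inj_on_def)
  also have "(\<Sum>x\<in>(\<lambda>m. - int m - 1) ` {..N}. f x) = (\<Sum>m\<le>N. f (- int m - 1))"
    by (subst sum.reindex) (auto simp: inj_on_def)
  also have "(\<Sum>m\<le>N. f (int m)) + (\<Sum>m\<le>N. f (- int m - 1)) = (1 - q) * (\<Sum>m\<le>N. cc q q m * f (int m))"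
  proof -
    have "(\<Sum>m\<le>N. f (int m)) + (\<Sum>m\<le>N. f (- int m - 1)) = (\<Sum>m\<le>N. (1 - q^(2*m+1)) * f (int m))"
      unfolding neg sum.distrib[symmetric] by (rule sum.cong) (auto simp: algebra_simps)
    also have "\<dots> = (1 - q) * (\<Sum>m\<le>N. cc q q m * f (int m))"
      unfolding sum_distrib_left cc2 using q1n by (intro sum.cong) auto
    finally show ?thesis .
  qed
  finally show "(1 - q) * (\<Sum>m\<le>N. cc q q m * S2 q (q^Suc N) b c (int m)) = (\<Sum>x\<in>{- int N - 1..int N}. S2 q (q^Suc N) b c x)"
    unfolding f_def by simp
qed

lemma S2_term:
  "S2 q (q^Suc N) b c (int m) = pr q (inverse q ^ N) m * pr q (q/b) m * pr q (q/c) m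
      / (Qr q q (N+1) (N+1+m) * pr q (q*q/(q/b)) m * pr q (q*q/(q/c)) m) * (q^2*q^(N+2)/((q/b)*(q/c)))^m * q^(m^2-m)"
proof -
  have e1: "pr q (q^Suc N * q) m = Qr q q (N+1) (N+1+m)"
  proof -
    have eq: "q^Suc N * q = q * q^(N+1)" by simp
    show ?thesis using pr_shiftN[of q q "N+1" m] unfolding eq[symmetric] .
  qed
  have e2: "q*q/(q/b) = b*q" "q*q/(q/c) = c*q" using q0 b0 c0 by auto
  have e3: "(q^Suc N * b * c)^m * q^(m^2) = (q^2*q^(N+2)/((q/b)*(q/c)))^m * q^(m^2-m)"
    unfolding pq3 using q0 b0 c0 by (simp add: field_simps power_mult_distrib power_add mult_2 mult_2_right power2_eq_square)
  have "S2 q (q^Suc N) b c (int m) = pr q (inverse q ^ N) m * pr q (q/b) m * pr q (q/c) m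
      / (Qr q q (N+1) (N+1+m) * pr q (b*q) m * pr q (c*q) m) * ((q^Suc N * b * c)^m * q^(m^2))"
    unfolding S2_pos qa_inv[OF q0] e1 by (simp only: mult.assoc)
  then show ?thesis unfolding e3 e2 by (simp only: mult.assoc)
qed

lemma LHS2: "(\<Sum>m\<le>N. cc q q m * S2 q (q^Suc N) b c (int m)) =
   (\<Sum>m\<le>N. cc q q m * (pr q (inverse q ^ N) m * pr q (q/b) m * pr q (q/c) m
      / (Qr q q (N+1) (N+1+m) * pr q (q*q/(q/b)) m * pr q (q*q/(q/c)) m)) * (q^2*q^(N+2)/((q/b)*(q/c)))^m * q^(m^2-m))"
proof (rule sum.cong)
  fix m
  show "cc q q m * S2 q (q^Suc N) b c (int m) = cc q q m * (pr q (inverse q ^ N) m * pr q (q/b) m * pr q (q/c) m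
      / (Qr q q (N+1) (N+1+m) * pr q (q*q/(q/b)) m * pr q (q*q/(q/c)) m)) * (q^2*q^(N+2)/((q/b)*(q/c)))^m * q^(m^2-m)"
    by (subst S2_term) (simp only: mult.assoc)
qed simp

lemma Qd2: "Qr q (q/(q/b)) 1 (N+1) \<noteq> 0"
proof (rule Qr_nz)
  fix t
  have "q/(q/b) * q^t = b*q^t" using q0 by simp
  then show "q/(q/b) * q^t \<noteq> 1" using wb[of t] by simp
qed

lemma Qe2: "Qr q (q/(q/c)) 1 (N+1) \<noteq> 0"
proof (rule Qr_nz)
  fix t
  have "q/(q/c) * q^t = c*q^t" using q0 by simp
  then show "q/(q/c) * q^t \<noteq> 1" using wc[of t] by simp
qed

lemma nY2: "pr q ((q/b)*(q/c)*inverse q ^ N/q) N \<noteq> 0"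
proof (rule pr_nz)
  fix t assume t: "t < N"
  show "(q/b)*(q/c)*inverse q ^ N/q * q^t \<noteq> 1"
  proof
    assume h: "(q/b)*(q/c)*inverse q ^ N/q * q^t = 1"
    have w: "q^N * inverse q ^ N = 1" using q0 by (simp add: power_mult_distrib[symmetric])
    have "q^Suc N * b * c = q^Suc N * b * c * ((q/b)*(q/c)*inverse q ^ N/q * q^t)" using h by simp
    also have "\<dots> = q^(t+2) * (q^N * inverse q ^ N)" using b0 c0 q0
      by (simp add: field_simps power_add eval_nat_numeral)
    finally show False using w wabc_nat[of "t+2"] by simp
  qed
qed

lemma W2: "(\<Sum>m\<le>N. cc q q m * S2 q (q^Suc N) b c (int m)) =
    Qr q q 1 (N+1) * Qr q (q*q/((q/b)*(q/c))) 0 N / (Qr q (q/(q/b)) 1 (N+1) * Qr q (q/(q/c)) 1 (N+1))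
     * (\<Sum>k\<le>N. pr q (inverse q ^ N) k * pr q (q/b) k * pr q (q/c) k / (pr q q k * pr q ((q/b)*(q/c)*inverse q ^ N/q) k) * q^k)"
  unfolding LHS2
  by (rule W_full[OF q0 qn _ _ _ _ Qd2 Qe2 nY2]) (use q0 b0 c0 qn in \<open>auto simp: power_Suc[symmetric] simp del: power_Suc\<close>)

lemma pref2:
  defines "a \<equiv> q^Suc N"
  shows "qpoch_inf q q * qpoch_inf (a*b) q * qpoch_inf (b*c) q * qpoch_inf (a*c) q
            / (qpoch_inf (a*q) q * qpoch_inf (b*q) q * qpoch_inf (c*q) q * qpoch_inf (a*b*c/q) q)
       = pr q q (N+1) * pr q (b*c) N / (pr q (b*q) N * pr q (c*q) N)"
proof -
  have s1: "qpoch_inf q q = pr q q (N+1) * qpoch_inf (a*q) q"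
  proof -
    have eq: "q*q^(N+1) = a*q" unfolding a_def by simp
    show ?thesis using qinf_split[OF q1, of q "N+1"] unfolding eq .
  qed
  have s2: "qpoch_inf (b*q) q = pr q (b*q) N * qpoch_inf (a*b) q"
  proof -
    have eq: "b*q*q^N = a*b" unfolding a_def by simp
    show ?thesis using qinf_split[OF q1, of "b*q" N] unfolding eq .
  qed
  have s3: "qpoch_inf (c*q) q = pr q (c*q) N * qpoch_inf (a*c) q"
  proof -
    have eq: "c*q*q^N = a*c" unfolding a_def by simp
    show ?thesis using qinf_split[OF q1, of "c*q" N] unfolding eq .
  qed
  have s4: "qpoch_inf (b*c) q = pr q (b*c) N * qpoch_inf (a*b*c/q) q"
  proof -
    have eq: "b*c*q^N = a*b*c/q" unfolding a_def using q0 by simp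
    show ?thesis using qinf_split[OF q1, of "b*c" N] unfolding eq .
  qed
  have n1: "qpoch_inf (a*q) q \<noteq> 0"
  proof (rule qinf_nz_shift)
    fix j
    have eq: "a*q*q^j = q^(Suc N + 1 + j)" unfolding a_def by (simp only: power_add power_one_right)
    have ne: "q^(Suc N + 1 + j) \<noteq> 1" by (rule qn) simp
    show "a*q*q^j \<noteq> 1" unfolding eq by (rule ne)
  qed
  have n2: "qpoch_inf (a*b) q \<noteq> 0"
  proof (rule qinf_nz_shift)
    fix j have eq: "a*b*q^j = b*q^(Suc N+j)" unfolding a_def by (simp add: power_add mult_ac)
    show "a*b*q^j \<noteq> 1" unfolding eq by (rule wb)
  qed
  have n3: "qpoch_inf (a*c) q \<noteq> 0"
  proof (rule qinf_nz_shift)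
    fix j have eq: "a*c*q^j = c*q^(Suc N+j)" unfolding a_def by (simp add: power_add mult_ac)
    show "a*c*q^j \<noteq> 1" unfolding eq by (rule wc)
  qed
  have n4: "qpoch_inf (a*b*c/q) q \<noteq> 0"
  proof (rule qinf_nz_shift)
    fix j show "a*b*c/q*q^j \<noteq> 1"
    proof
      assume h: "a*b*c/q*q^j = 1"
      have "q powi (1 - int j) = q^1 / q^j"
        using power_int_diff[OF disjI1[OF q0], of 1 "int j"] by (simp add: power_int_of_nat)
      also have "\<dots> = a*b*c" using h q0 by (simp add: field_simps)
      finally show False using wabc[of "1 - int j"] unfolding a_def by (simp add: mult.assoc)
    qed
  qed
  show ?thesis unfolding s1 s2 s3 s4 using n1 n2 n3 n4 by (simp add: field_simps)
qed

lemma RHSsum2: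
  defines "a \<equiv> q^Suc N"
  shows "(\<Sum>k::nat. qpoch (q/a) q (int k) * qpoch (q/b) q (int k) * qpoch (q/c) q (int k)
                 / (qpoch q q (int k) * qpoch (q^2/(a*b*c)) q (int k)) * q ^ k)
     = (\<Sum>k\<le>N. pr q (inverse q ^ N) k * pr q (q/b) k * pr q (q/c) k / (pr q q k * pr q ((q/b)*(q/c)*inverse q ^ N/q) k) * q^k)"
proof -
  have qa: "q/a = inverse q ^ N" unfolding a_def by (rule qa_inv[OF q0])
  have q3: "q^2/(a*b*c) = (q/b)*(q/c)*inverse q ^ N/q"
    unfolding a_def using q0 b0 c0 by (simp add: field_simps power_inverse eval_nat_numeral)
  have "(\<Sum>k::nat. qpoch (q/a) q (int k) * qpoch (q/b) q (int k) * qpoch (q/c) q (int k)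
                 / (qpoch q q (int k) * qpoch (q^2/(a*b*c)) q (int k)) * q ^ k)
      = (\<Sum>k\<in>{..N}. qpoch (q/a) q (int k) * qpoch (q/b) q (int k) * qpoch (q/c) q (int k)
                 / (qpoch q q (int k) * qpoch (q^2/(a*b*c)) q (int k)) * q ^ k)"
    by (rule suminf_finite) (use pr_qa_zero[OF q0] in \<open>auto simp: qpoch_nat qa\<close>)
  then show ?thesis unfolding qpoch_nat qa q3 by simp
qed

lemma RHS2:
  defines "a \<equiv> q^Suc N"
  shows "qpoch_inf q q * qpoch_inf (a*b) q * qpoch_inf (b*c) q * qpoch_inf (a*c) q
            / (qpoch_inf (a*q) q * qpoch_inf (b*q) q * qpoch_inf (c*q) q * qpoch_inf (a*b*c/q) q)
            * (\<Sum>k::nat. qpoch (q/a) q (int k) * qpoch (q/b) q (int k) * qpoch (q/c) q (int k)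
                 / (qpoch q q (int k) * qpoch (q^2/(a*b*c)) q (int k)) * q ^ k)
      = (1 - q) * (\<Sum>m\<le>N. cc q q m * S2 q (q^Suc N) b c (int m))"
proof -
  have e1: "Qr q q 1 (N+1) = pr q (q*q) N" using pr_shift1[of q q N] by simp
  have e0: "pr q q (N+1) = (1 - q) * pr q (q*q) N" using pr_Suc'[of q q N] by simp
  have e2: "Qr q (q*q/((q/b)*(q/c))) 0 N = pr q (b*c) N"
  proof -
    have "q*q/((q/b)*(q/c)) = b*c" using q0 b0 c0 by (simp add: field_simps)
    then show ?thesis by (simp add: pr_Qr)
  qed
  have e3: "Qr q (q/(q/b)) 1 (N+1) = pr q (b*q) N"
  proof -
    have eq: "q/(q/b) = b" using q0 b0 by simp
    show ?thesis unfolding eq using pr_shift1[of q b N] by simp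
  qed
  have e4: "Qr q (q/(q/c)) 1 (N+1) = pr q (c*q) N"
  proof -
    have eq: "q/(q/c) = c" using q0 c0 by simp
    show ?thesis unfolding eq using pr_shift1[of q c N] by simp
  qed
  show ?thesis unfolding W2 e1 e2 e3 e4 pref2[folded a_def] RHSsum2[folded a_def] e0
    by (simp only: mult_ac times_divide_eq_left times_divide_eq_right)
qed

theorem ident2:
  defines "a \<equiv> q^Suc N"
  shows "((\<lambda>k::int. qpoch (q/a) q k * qpoch (q/b) q k * qpoch (q/c) q k
                    / (qpoch (a*q) q k * qpoch (b*q) q k * qpoch (c*q) q k)
                    * (a*b*c) powi k * q powi (k^2))
         has_sum
           (qpoch_inf q q * qpoch_inf (a*b) q * qpoch_inf (b*c) q * qpoch_inf (a*c) q
            / (qpoch_inf (a*q) q * qpoch_inf (b*q) q * qpoch_inf (c*q) q * qpoch_inf (a*b*c/q) q)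
            * (\<Sum>k::nat. qpoch (q/a) q (int k) * qpoch (q/b) q (int k) * qpoch (q/c) q (int k)
                 / (qpoch q q (int k) * qpoch (q^2/(a*b*c)) q (int k)) * q ^ k))) UNIV"
proof -
  have h: "(S2 q (q^Suc N) b c has_sum
           (qpoch_inf q q * qpoch_inf (a*b) q * qpoch_inf (b*c) q * qpoch_inf (a*c) q
            / (qpoch_inf (a*q) q * qpoch_inf (b*q) q * qpoch_inf (c*q) q * qpoch_inf (a*b*c/q) q)
            * (\<Sum>k::nat. qpoch (q/a) q (int k) * qpoch (q/b) q (int k) * qpoch (q/c) q (int k)
                 / (qpoch q q (int k) * qpoch (q^2/(a*b*c)) q (int k)) * q ^ k))) UNIV"
    unfolding a_def RHS2 by (rule S2_hassum)
  show ?thesis using h unfolding S2_def a_def .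
qed

end

theorem corollary1p2:
  fixes q a b c :: complex
  assumes q: "0 < cmod q" "cmod q < 1"
    and special: "\<exists>n::nat. n \<ge> 1 \<and> (a = q ^ n \<or> b = q ^ n \<or> c = q ^ n)"
    and nz: "a \<noteq> 0" "b \<noteq> 0" "c \<noteq> 0"
    and wd_a: "\<forall>j::nat. a * q ^ j \<noteq> 1"
    and wd_b: "\<forall>j::nat. b * q ^ j \<noteq> 1"
    and wd_c: "\<forall>j::nat. c * q ^ j \<noteq> 1"
    and wd_abc: "\<forall>m::int. a * b * c \<noteq> q powi m"
  shows "((\<lambda>k::int. qpoch (q/a) q k * qpoch (q/b) q k * qpoch (q/c) q k
                    / (qpoch a q k * qpoch b q k * qpoch c q k)
                    * (a*b*c) powi k * q powi (k^2 - 2*k))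
         has_sum
           (qpoch_inf q q * qpoch_inf (a*b/q) q * qpoch_inf (b*c/q) q * qpoch_inf (a*c/q) q
            / (qpoch_inf a q * qpoch_inf b q * qpoch_inf c q * qpoch_inf (a*b*c/q^2) q)
            * (\<Sum>k::nat. qpoch (q/a) q (int k) * qpoch (q/b) q (int k) * qpoch (q/c) q (int k)
                 / (qpoch q q (int k) * qpoch (q^3/(a*b*c)) q (int k)) * q ^ k))) UNIV
       \<and> ((\<lambda>k::int. qpoch (q/a) q k * qpoch (q/b) q k * qpoch (q/c) q k
                    / (qpoch (a*q) q k * qpoch (b*q) q k * qpoch (c*q) q k)
                    * (a*b*c) powi k * q powi (k^2))
         has_sum
           (qpoch_inf q q * qpoch_inf (a*b) q * qpoch_inf (b*c) q * qpoch_inf (a*c) q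
            / (qpoch_inf (a*q) q * qpoch_inf (b*q) q * qpoch_inf (c*q) q * qpoch_inf (a*b*c/q) q)
            * (\<Sum>k::nat. qpoch (q/a) q (int k) * qpoch (q/b) q (int k) * qpoch (q/c) q (int k)
                 / (qpoch q q (int k) * qpoch (q^2/(a*b*c)) q (int k)) * q ^ k))) UNIV"
proof -
  from special obtain n where n1: "n \<ge> 1" and abc: "a = q^n \<or> b = q^n \<or> c = q^n" by blast
  obtain N where nN: "n = Suc N" using n1 by (cases n) auto
  have wa: "a * q^j \<noteq> 1" for j using wd_a by blast
  have wb: "b * q^j \<noteq> 1" for j using wd_b by blast
  have wc: "c * q^j \<noteq> 1" for j using wd_c by blast
  have w1: "a * b * c \<noteq> q powi m" for m using wd_abc by blast
  have w2: "b * a * c \<noteq> q powi m" for m using wd_abc by (simp add: mult_ac)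
  have w3: "c * a * b \<noteq> q powi m" for m using wd_abc by (simp add: mult_ac)
  consider "a = q^Suc N" | "b = q^Suc N" | "c = q^Suc N" using abc nN by blast
  then show ?thesis
  proof cases
    case 1
    note h1 = ident1[of q b c N, OF q(1) q(2) nz(2) nz(3) wb wc, folded 1, OF w1]
    note h2 = ident2[of q b c N, OF q(1) q(2) nz(2) nz(3) wb wc, folded 1, OF w1]
    show ?thesis using h1 h2 by blast
  next
    case 2
    note h1 = ident1[of q a c N, OF q(1) q(2) nz(1) nz(3) wa wc, folded 2, OF w2]
    note h2 = ident2[of q a c N, OF q(1) q(2) nz(1) nz(3) wa wc, folded 2, OF w2]
    show ?thesis using h1 h2 by (simp only: mult_ac)
  next
    case 3
    note h1 = ident1[of q a b N, OF q(1) q(2) nz(1) nz(2) wa wb, folded 3, OF w3]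
    note h2 = ident2[of q a b N, OF q(1) q(2) nz(1) nz(2) wa wb, folded 3, OF w3]
    show ?thesis using h1 h2 by (simp only: mult_ac)
  qed
qed

end
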